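(* Let $T\subset\mathbb R^n$ be bounded. Then $\lim_{r\to+\infty}C_{\mathcal K}(T,B_r)=\mathrm{cap}_{\mathcal K}(T)$. Moreover there is $c=c(n,s,p,\alpha)>0$ such that for all $0<r<R$, $$\mathrm{cap}_{\mathcal K}(T)-\mathrm{cap}_{\mathcal K}(T,B_R;r)\le\frac{c\,r^{sp}}{(R-r)^{sp}}\,C_{\mathcal K}(T,B_r).$$
   Context: $n\ge2$, $p\in(1,\infty)$, $s\in(0,1)$, $sp\in(1,n)$. $K:\mathbb R^n\setminus\{0\}\to(0,\infty)$ is measurable with $K(tz)=t^{-(n+sp)}K(z)$ for $t>0$ and $\alpha^{-1}|z|^{-(n+sp)}\le K(z)\le\alpha|z|^{-(n+sp)}$ for some $\alpha\ge1$. For $u\in W^{s,p}(\mathbb R^n)$ and open $A$, $\mathcal K(u,A):=\int_{A\times A}K(x-y)|u(x)-u(y)|^pdxdy$, $\mathcal K(u):=\mathcal K(u,\mathbb R^n)$. $\tilde w$ is the precise representative and "q.e." means up to sets of zero $(s,p)$-capacity. $\mathrm{cap}_{\mathcal K}(T):=\inf\{\mathcal K(w):w\in W^{s,p}(\mathbb R^n),\tilde w\ge1\text{ q.e. on }T\}$; $C_{\mathcal K}(T,B_r):=\inf\{\mathcal K(w):w\in W^{s,p}(\mathbb R^n),w=0\text{ on }\mathbb R^n\setminus B_r,\tilde w\ge1\text{ q.e. on }T\}$; $\mathrm{cap}_{\mathcal K}(T,B_R;r):=\inf\{\mathcal K(w,B_R):w\in W^{s,p}(\mathbb R^n),w=0\text{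 on }\mathbb R^n\setminus B_r,\tilde w\ge1\text{ q.e. on }T\}$. $B_r$ is the open ball of radius $r$ about $0$. *)

theory Defs
  imports "HOL-Analysis.Analysis"
begin

text \<open>Functions on R^n are modelled as 'a \<Rightarrow> real with 'a a Euclidean space, n = DIM('a).
 Double integrals are Lebesgue integrals on the product space 'a \<times> 'a (itself Euclidean).\<close>

definition frac_sobolev :: "real \<Rightarrow> real \<Rightarrow> ('a::euclidean_space \<Rightarrow> real) set" where
  "frac_sobolev s p = {u. u \<in> borel_measurable lebesgue \<and>
     (\<integral>\<^sup>+ x. ennreal (\<bar>u x\<bar> powr p) \<partial>lebesgue) < \<infinity> \<and>
     (\<integral>\<^sup>+ z. ennreal (\<bar>u (fst z) - u (snd z)\<bar> powr p /
          norm (fst z - snd z) powr (real DIM('a) + s * p)) \<partial>(lebesgue :: ('a \<times> 'a) measure)) < \<infinity>}"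

definition sobolev_norm_p :: "real \<Rightarrow> real \<Rightarrow> ('a::euclidean_space \<Rightarrow> real) \<Rightarrow> ennreal" where
  "sobolev_norm_p s p u =
     (\<integral>\<^sup>+ x. ennreal (\<bar>u x\<bar> powr p) \<partial>lebesgue) +
     (\<integral>\<^sup>+ z. ennreal (\<bar>u (fst z) - u (snd z)\<bar> powr p /
          norm (fst z - snd z) powr (real DIM('a) + s * p)) \<partial>(lebesgue :: ('a \<times> 'a) measure))"

definition sp_capacity :: "real \<Rightarrow> real \<Rightarrow> ('a::euclidean_space) set \<Rightarrow> ennreal" where
  "sp_capacity s p E = Inf {sobolev_norm_p s p u | u. u \<in> frac_sobolev s p \<and>
     (\<exists>U. open U \<and> E \<subseteq> U \<and> (AE x in lebesgue. x \<in> U \<longrightarrow> u x \<ge> 1))}"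

definition qe_on :: "real \<Rightarrow> real \<Rightarrow> ('a::euclidean_space) set \<Rightarrow> ('a \<Rightarrow> bool) \<Rightarrow> bool" where
  "qe_on s p T P \<longleftrightarrow> (\<exists>N. sp_capacity s p N = 0 \<and> (\<forall>x\<in>T - N. P x))"

text \<open>Precise representative: limit of ball averages where it exists (0 elsewhere;
  this set has zero capacity for W^{s,p} functions, so the convention is irrelevant).\<close>
definition ball_avg :: "('a::euclidean_space \<Rightarrow> real) \<Rightarrow> 'a \<Rightarrow> real \<Rightarrow> real" where
  "ball_avg w x \<rho> = (\<integral> y \<in> ball x \<rho>. w y \<partial>lebesgue) / measure lebesgue (ball x \<rho>)"

definition precise_rep :: "('a::euclidean_space \<Rightarrow> real) \<Rightarrow> 'a \<Rightarrow> real" where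
  "precise_rep w x = (if (\<exists>l. (ball_avg w x \<longlongrightarrow> l) (at_right 0))
                      then Lim (at_right 0) (ball_avg w x) else 0)"

definition admissible_kernel :: "real \<Rightarrow> real \<Rightarrow> real \<Rightarrow> ('a::euclidean_space \<Rightarrow> real) \<Rightarrow> bool" where
  "admissible_kernel s p \<alpha> K \<longleftrightarrow>
     K \<in> borel_measurable lebesgue \<and>
     (\<forall>z. z \<noteq> 0 \<longrightarrow> K z > 0) \<and>
     (\<forall>z t. z \<noteq> 0 \<longrightarrow> t > 0 \<longrightarrow> K (t *\<^sub>R z) = t powr (-(real DIM('a) + s * p)) * K z) \<and>
     (\<forall>z. z \<noteq> 0 \<longrightarrow> norm z powr (-(real DIM('a) + s * p)) / \<alpha> \<le> K z \<and>
                      K z \<le> \<alpha> * norm z powr (-(real DIM('a) + s * p)))"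

definition energyK :: "('a::euclidean_space \<Rightarrow> real) \<Rightarrow> real \<Rightarrow> ('a \<Rightarrow> real) \<Rightarrow> 'a set \<Rightarrow> ennreal" where
  "energyK K p u A = (\<integral>\<^sup>+ z. indicator (A \<times> A) z *
       ennreal (K (fst z - snd z) * \<bar>u (fst z) - u (snd z)\<bar> powr p) \<partial>(lebesgue :: ('a \<times> 'a) measure))"

definition capK :: "('a::euclidean_space \<Rightarrow> real) \<Rightarrow> real \<Rightarrow> real \<Rightarrow> 'a set \<Rightarrow> ennreal" where
  "capK K s p T = Inf {energyK K p w UNIV | w. w \<in> frac_sobolev s p \<and>
       qe_on s p T (\<lambda>x. precise_rep w x \<ge> 1)}"

definition CK :: "('a::euclidean_space \<Rightarrow> real) \<Rightarrow> real \<Rightarrow> real \<Rightarrow> 'a set \<Rightarrow> real \<Rightarrow> ennreal" where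
  "CK K s p T r = Inf {energyK K p w UNIV | w. w \<in> frac_sobolev s p \<and>
       (AE x in lebesgue. x \<notin> ball 0 r \<longrightarrow> w x = 0) \<and>
       qe_on s p T (\<lambda>x. precise_rep w x \<ge> 1)}"

definition capK_rel :: "('a::euclidean_space \<Rightarrow> real) \<Rightarrow> real \<Rightarrow> real \<Rightarrow> 'a set \<Rightarrow> real \<Rightarrow> real \<Rightarrow> ennreal" where
  "capK_rel K s p T R r = Inf {energyK K p w (ball 0 R) | w. w \<in> frac_sobolev s p \<and>
       (AE x in lebesgue. x \<notin> ball 0 r \<longrightarrow> w x = 0) \<and>
       qe_on s p T (\<lambda>x. precise_rep w x \<ge> 1)}"

end

theory Submission
  imports Defs
begin

lemma nn_integral_le_by_measurable:
  assumes "\<And>h. h \<in> borel_measurable M \<Longrightarrow> (\<And>x. h x \<le> f x) \<Longrightarrow> integral\<^sup>N M h \<le> X"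
  shows "integral\<^sup>N M f \<le> X"
  unfolding nn_integral_def
proof (rule SUP_least)
  fix s assume "s \<in> {g. simple_function M g \<and> g \<le> f}"
  then have s: "simple_function M s" "s \<le> f" by auto
  have "integral\<^sup>S M s = integral\<^sup>N M s" using s(1) by (simp add: nn_integral_eq_simple_integral)
  also have "\<dots> \<le> X" using assms[of s] s borel_measurable_simple_function[OF s(1)] by (auto simp: le_fun_def)
  finally show "integral\<^sup>S M s \<le> X" .
qed

lemma nn_integral_add_le:
  assumes g: "g \<in> borel_measurable M"
  shows "(\<integral>\<^sup>+x. f x + g x \<partial>M) \<le> integral\<^sup>N M f + integral\<^sup>N M g"
proof (rule nn_integral_le_by_measurable)
  fix h assume h: "h \<in> borel_measurable M" "\<And>x. h x \<le> f x + g x"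
  define h' where "h' x = (if g x = top then 0 else h x - g x)" for x
  have hm: "h' \<in> borel_measurable M" unfolding h'_def using h g by measurable
  have "integral\<^sup>N M h \<le> (\<integral>\<^sup>+x. h' x + g x \<partial>M)"
  proof (intro nn_integral_mono)
    fix x show "h x \<le> h' x + g x"
      by (cases "g x = top") (auto simp: h'_def diff_add_self_ennreal)
  qed
  also have "\<dots> = integral\<^sup>N M h' + integral\<^sup>N M g"
    using hm g by (intro nn_integral_add) auto
  also have "integral\<^sup>N M h' \<le> integral\<^sup>N M f"
  proof (intro nn_integral_mono)
    fix x show "h' x \<le> f x"
      using h(2)[of x] by (cases "g x = top") (auto simp: h'_def ennreal_minus_le_iff add.commute)
  qed
  finally show "integral\<^sup>N M h \<le> integral\<^sup>N M f + integral\<^sup>N M g" by (simp add: add_right_mono order_trans)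
qed

lemma nn_integral_cmult_le:
  assumes c: "c \<noteq> (top::ennreal)"
  shows "(\<integral>\<^sup>+x. c * f x \<partial>M) \<le> c * integral\<^sup>N M f"
proof (cases "c = 0")
  case True then show ?thesis by simp
next
  case False
  show ?thesis
  proof (rule nn_integral_le_by_measurable)
    fix h assume h: "h \<in> borel_measurable M" "\<And>x. h x \<le> c * f x"
    have "integral\<^sup>N M h = (\<integral>\<^sup>+x. c * (h x / c) \<partial>M)"
      using False c by (intro nn_integral_cong) (metis ennreal_times_divide ennreal_mult_divide_eq mult.commute)
    also have "\<dots> = c * (\<integral>\<^sup>+x. h x / c \<partial>M)" using h by (intro nn_integral_cmult) auto
    also have "(\<integral>\<^sup>+x. h x / c \<partial>M) \<le> integral\<^sup>N M f"
      using h(2) False c by (intro nn_integral_mono) (metis divide_right_mono_ennreal ennreal_mult_divide_eq mult.commute)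
    finally show "integral\<^sup>N M h \<le> c * integral\<^sup>N M f" by (simp add: mult_left_mono)
  qed
qed

lemma tonelli_snd:
  fixes f :: "('a::euclidean_space \<times> 'a) \<Rightarrow> ennreal"
  assumes f: "f \<in> borel_measurable borel"
  shows "(\<integral>\<^sup>+z. f z \<partial>(lebesgue :: ('a \<times> 'a) measure)) = (\<integral>\<^sup>+y. \<integral>\<^sup>+x. f (x,y) \<partial>lborel \<partial>lborel)"
proof -
  have fm: "f \<in> borel_measurable (lborel \<Otimes>\<^sub>M lborel)"
    using f by (simp add: lborel_prod)
  have "(\<integral>\<^sup>+z. f z \<partial>(lebesgue :: ('a \<times> 'a) measure)) = (\<integral>\<^sup>+z. f z \<partial>(lborel \<Otimes>\<^sub>M lborel))"
    by (simp add: nn_integral_completion lborel_prod)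
  also have "\<dots> = (\<integral>\<^sup>+y. \<integral>\<^sup>+x. f (x,y) \<partial>lborel \<partial>lborel)"
    by (rule lborel_pair.nn_integral_snd[OF fm, symmetric])
  finally show ?thesis .
qed

lemma tonelli_fst:
  fixes f :: "('a::euclidean_space \<times> 'a) \<Rightarrow> ennreal"
  assumes f: "f \<in> borel_measurable borel"
  shows "(\<integral>\<^sup>+z. f z \<partial>(lebesgue :: ('a \<times> 'a) measure)) = (\<integral>\<^sup>+x. \<integral>\<^sup>+y. f (x,y) \<partial>lborel \<partial>lborel)"
proof -
  have fm: "f \<in> borel_measurable (lborel \<Otimes>\<^sub>M lborel)"
    using f by (simp add: lborel_prod)
  have "(\<integral>\<^sup>+z. f z \<partial>(lebesgue :: ('a \<times> 'a) measure)) = (\<integral>\<^sup>+z. f z \<partial>(lborel \<Otimes>\<^sub>M lborel))"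
    by (simp add: nn_integral_completion lborel_prod)
  also have "\<dots> = (\<integral>\<^sup>+x. \<integral>\<^sup>+y. f (x,y) \<partial>lborel \<partial>lborel)"
    by (rule lborel.nn_integral_fst[OF fm, symmetric])
  finally show ?thesis .
qed

lemma AE_pair_notin:
  fixes N :: "'a::euclidean_space set"
  assumes N: "N \<in> null_sets lborel"
  shows "AE z in (lebesgue :: ('a \<times> 'a) measure). fst z \<notin> N \<and> snd z \<notin> N"
proof -
  have "N \<times> UNIV \<in> null_sets (lborel \<Otimes>\<^sub>M (lborel::'a measure))"
    using N by (intro lborel.times_in_null_sets1) auto
  moreover have "UNIV \<times> N \<in> null_sets (lborel \<Otimes>\<^sub>M (lborel::'a measure))"
    using N by (intro lborel.times_in_null_sets2) auto
  ultimately have "N \<times> UNIV \<union> UNIV \<times> N \<in> null_sets (lborel :: ('a \<times> 'a) measure)"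
    by (auto simp: lborel_prod intro!: null_sets.Un)
  then have "AE z in (lborel :: ('a \<times> 'a) measure). z \<notin> N \<times> UNIV \<union> UNIV \<times> N"
    by (rule AE_not_in)
  then have "AE z in (lebesgue :: ('a \<times> 'a) measure). z \<notin> N \<times> UNIV \<union> UNIV \<times> N"
    by (rule AE_completion)
  then show ?thesis by (rule AE_mp) (auto intro!: AE_I2 simp: mem_Times_iff)
qed

lemma borel_version:
  fixes w :: "'a::euclidean_space \<Rightarrow> real"
  assumes "w \<in> borel_measurable lebesgue"
  obtains w' N where "w' \<in> borel_measurable borel" "N \<in> null_sets lborel" "\<And>x. x \<notin> N \<Longrightarrow> w x = w' x"
proof -
  obtain w' where w': "w' \<in> borel_measurable lborel" "AE x in lborel. w x = w' x"
    using completion_ex_borel_measurable_real[OF assms] by blast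
  from w'(2) obtain N where "N \<in> null_sets lborel" "{x \<in> space lborel. w x \<noteq> w' x} \<subseteq> N"
    unfolding eventually_ae_filter by blast
  then show ?thesis using that[of w' N] w'(1) by auto
qed

lemma convex_split:
  fixes a b l p :: real
  assumes "0 < l" "l < 1" "1 \<le> p"
  shows "\<bar>a + b\<bar> powr p \<le> l powr (1 - p) * \<bar>a\<bar> powr p + (1 - l) powr (1 - p) * \<bar>b\<bar> powr p"
proof -
  have mono: "\<bar>a + b\<bar> powr p \<le> (\<bar>a\<bar> + \<bar>b\<bar>) powr p"
    using assms by (intro powr_mono2) auto
  have gen: "x powr (1 - p) \<ge> 1" if "0 < x" "x < 1" for x
  proof -
    have "x powr (p - 1) \<le> 1" "x powr (p - 1) > 0" using that assms by (auto intro!: powr_le1)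
    moreover have "x powr (1 - p) = inverse (x powr (p - 1))"
      by (metis minus_diff_eq powr_minus)
    ultimately show ?thesis by (simp add: one_le_inverse)
  qed
  have l1: "l powr (1 - p) \<ge> 1" using assms gen by auto
  have l2: "(1 - l) powr (1 - p) \<ge> 1" using assms gen by auto
  consider "a = 0" | "b = 0" | "a \<noteq> 0" "b \<noteq> 0" by blast
  then show ?thesis
  proof cases
    case 1
    then show ?thesis using l2 by (auto intro!: order_trans[OF _ mult_right_mono[OF l2]])
  next
    case 2
    then show ?thesis using l1 by (auto intro!: order_trans[OF _ mult_right_mono[OF l1]])
  next
    case 3
    let ?x = "\<bar>a\<bar> / l" and ?y = "\<bar>b\<bar> / (1 - l)"
    have cv: "convex_on {0<..} (\<lambda>x. x powr p)" using assms(3) by (rule powr_convex)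
    have xy: "?x \<in> {0<..}" "?y \<in> {0<..}" using 3 assms by auto
    have "(l * ?x + (1 - l) * ?y) powr p \<le> l * ?x powr p + (1 - l) * ?y powr p"
      using convex_onD[OF cv, of "1 - l" ?x ?y] xy assms by auto
    moreover have "l * ?x + (1 - l) * ?y = \<bar>a\<bar> + \<bar>b\<bar>" using assms by auto
    moreover have "l * ?x powr p = l powr (1 - p) * \<bar>a\<bar> powr p"
      using assms by (simp add: powr_divide powr_diff field_simps)
    moreover have "(1 - l) * ?y powr p = (1 - l) powr (1 - p) * \<bar>b\<bar> powr p"
      using assms by (simp add: powr_divide powr_diff field_simps)
    ultimately show ?thesis using mono by auto
  qed
qed

lemma dyadic_exists:
  fixes x :: real assumes "1 \<le> x"
  shows "\<exists>k::nat. 2 ^ k \<le> x \<and> x < 2 ^ Suc k"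
proof -
  obtain m :: nat where m: "x < 2 ^ m"
    using real_arch_pow[of 2 x] by auto
  have "\<forall>x::real. 1 \<le> x \<and> x < 2 ^ m \<longrightarrow> (\<exists>k::nat. 2 ^ k \<le> x \<and> x < 2 ^ Suc k)"
  proof (induction m)
    case 0 then show ?case by auto
  next
    case (Suc m)
    show ?case
    proof (intro allI impI)
      fix x :: real assume x: "1 \<le> x \<and> x < 2 ^ Suc m"
      show "\<exists>k::nat. 2 ^ k \<le> x \<and> x < 2 ^ Suc k"
      proof (cases "x < 2 ^ m")
        case True then show ?thesis using Suc.IH x by blast
      next
        case False then show ?thesis using x by (intro exI[of _ m]) auto
      qed
    qed
  qed
  then show ?thesis using m assms by blast
qed

lemma ennreal_le_suminf: "(f::nat \<Rightarrow> ennreal) k \<le> suminf f"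
proof -
  have "f k \<le> sum f {..<Suc k}" by (intro member_le_sum) auto
  also have "\<dots> \<le> suminf f" by (intro sum_le_suminf summableI) auto
  finally show ?thesis .
qed

lemma geom_ennreal:
  fixes A q :: real
  assumes "0 \<le> A" "0 \<le> q" "q < 1"
  shows "(\<Sum>k. ennreal (A * q ^ k)) = ennreal (A / (1 - q))"
proof -
  have "(\<lambda>k. A * q ^ k) sums (A * (1 / (1 - q)))"
    using assms by (intro sums_mult geometric_sums) auto
  then show ?thesis using assms by (subst suminf_ennreal_eq) auto
qed

lemma tail_integral:
  fixes t \<rho> :: real
  assumes t: "0 < t" and \<rho>: "0 < \<rho>"
  shows "(\<integral>\<^sup>+z. indicator {z::'a::euclidean_space. \<rho> \<le> norm z} z * ennreal (norm z powr (-(real DIM('a) + t))) \<partial>lborel)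
         \<le> ennreal (unit_ball_vol (real DIM('a)) * 2 ^ DIM('a) / (1 - 2 powr (-t)) * \<rho> powr (-t))"
proof -
  let ?n = "real DIM('a)"
  define r where "r k = 2 ^ k * \<rho>" for k :: nat
  have rpos: "r k > 0" for k using \<rho> by (simp add: r_def)
  define f where "f k z = indicator {z::'a. norm z \<le> r (Suc k)} z * ennreal (r k powr (-(?n + t)))" for k z
  have pt: "indicator {z::'a. \<rho> \<le> norm z} z * ennreal (norm z powr (-(?n + t))) \<le> (\<Sum>k. f k z)" for z
  proof (cases "\<rho> \<le> norm z")
    case True
    then have "1 \<le> norm z / \<rho>" using \<rho> by simp
    then obtain k :: nat where k: "2 ^ k \<le> norm z / \<rho>" "norm z / \<rho> < 2 ^ Suc k"
      using dyadic_exists by blast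
    have k1: "r k \<le> norm z" "norm z \<le> r (Suc k)"
      using k \<rho> by (auto simp: r_def field_simps)
    have "norm z powr (-(?n + t)) \<le> r k powr (-(?n + t))"
      using k1 rpos[of k] t by (intro powr_mono2') auto
    then have "indicator {z::'a. \<rho> \<le> norm z} z * ennreal (norm z powr (-(?n + t))) \<le> f k z"
      using True k1 by (auto simp: f_def intro!: ennreal_leI)
    also have "\<dots> \<le> (\<Sum>k. f k z)" by (rule ennreal_le_suminf)
    finally show ?thesis .
  qed simp
  have "(\<integral>\<^sup>+z. indicator {z::'a. \<rho> \<le> norm z} z * ennreal (norm z powr (-(?n + t))) \<partial>lborel)
        \<le> (\<integral>\<^sup>+z. (\<Sum>k. f k z) \<partial>lborel)"
    by (intro nn_integral_mono pt)
  also have "\<dots> = (\<Sum>k. integral\<^sup>N lborel (f k))"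
    by (intro nn_integral_suminf) (unfold f_def, measurable)
  also have "\<dots> = (\<Sum>k. ennreal (unit_ball_vol ?n * 2 ^ DIM('a) * \<rho> powr (-t) * (2 powr (-t)) ^ k))"
  proof (intro suminf_cong)
    fix k
    have cb: "{z::'a. norm z \<le> r (Suc k)} = cball 0 (r (Suc k))" by auto
    have "integral\<^sup>N lborel (f k) = ennreal (r k powr (-(?n + t))) * emeasure lborel (cball (0::'a) (r (Suc k)))"
      unfolding f_def cb by (subst mult.commute) (simp add: nn_integral_cmult_indicator)
    also have "\<dots> = ennreal (r k powr (-(?n + t)) * (unit_ball_vol ?n * r (Suc k) ^ DIM('a)))"
      using rpos[of "Suc k"] by (simp add: emeasure_cball ennreal_mult' unit_ball_vol_nonneg)
    also have "r k powr (-(?n + t)) * (unit_ball_vol ?n * r (Suc k) ^ DIM('a))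
        = unit_ball_vol ?n * 2 ^ DIM('a) * \<rho> powr (-t) * (2 powr (-t)) ^ k"
    proof -
      have a: "r (Suc k) ^ DIM('a) = 2 ^ DIM('a) * r k powr ?n"
        using rpos[of k] by (simp add: r_def powr_realpow power_mult_distrib)
      have b: "r k powr (-(?n + t)) * r k powr ?n = r k powr (-t)"
        by (simp add: powr_add[symmetric])
      have c: "r k powr (-t) = \<rho> powr (-t) * (2 powr (-t)) ^ k"
        using \<rho> by (simp add: r_def powr_mult powr_realpow[symmetric] powr_powr
                  flip: powr_power) (simp add: mult.commute)
      show ?thesis using a b c by (metis (no_types, lifting) mult.assoc mult.commute)
    qed
    finally show "integral\<^sup>N lborel (f k) = ennreal (unit_ball_vol ?n * 2 ^ DIM('a) * \<rho> powr (-t) * (2 powr (-t)) ^ k)" .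
  qed
  also have "\<dots> = ennreal (unit_ball_vol ?n * 2 ^ DIM('a) * \<rho> powr (-t) / (1 - 2 powr (-t)))"
    using t by (intro geom_ennreal) (auto simp: unit_ball_vol_nonneg intro!: powr_less_one)
  finally show ?thesis by (simp add: field_simps)
qed

lemma inner_integral:
  fixes b \<rho> :: real
  assumes b: "0 < b" and \<rho>: "0 < \<rho>"
  shows "(\<integral>\<^sup>+z. indicator {z::'a::euclidean_space. norm z < \<rho>} z * ennreal (norm z powr (b - real DIM('a))) \<partial>lborel)
         \<le> ennreal (unit_ball_vol (real DIM('a)) * 2 ^ DIM('a) / (1 - 2 powr (-b)) * \<rho> powr b)"
proof -
  let ?n = "real DIM('a)"
  define r where "r k = \<rho> / 2 ^ k" for k :: nat
  have rpos: "r k > 0" for k using \<rho> by (simp add: r_def)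
  define f where "f k z = indicator {z::'a. norm z \<le> r k} z * ennreal (2 ^ DIM('a) * r k powr (b - ?n))" for k z
  have pt: "indicator {z::'a. norm z < \<rho>} z * ennreal (norm z powr (b - ?n)) \<le> (\<Sum>k. f k z)" for z
  proof (cases "norm z < \<rho> \<and> z \<noteq> 0")
    case True
    then have "1 \<le> \<rho> / norm z" using \<rho> by simp
    then obtain k :: nat where k: "2 ^ k \<le> \<rho> / norm z" "\<rho> / norm z < 2 ^ Suc k"
      using dyadic_exists by blast
    have nz: "norm z > 0" using True by auto
    have k1: "norm z \<le> r k" "r k / 2 \<le> norm z"
      using k \<rho> nz by (auto simp: r_def field_simps)
    have "norm z powr (b - ?n) = norm z powr b * norm z powr (- ?n)"
      by (simp add: powr_add[symmetric])
    also have "\<dots> \<le> r k powr b * (r k / 2) powr (- ?n)"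
      using k1 nz b rpos[of k]
      by (intro mult_mono powr_mono2 powr_mono2') auto
    also have "\<dots> = 2 ^ DIM('a) * r k powr (b - ?n)"
      using rpos[of k] by (simp add: powr_divide powr_minus_divide powr_add powr_realpow field_simps powr_diff)
    finally have le: "norm z powr (b - ?n) \<le> 2 ^ DIM('a) * r k powr (b - ?n)" .
    then have "indicator {z::'a. norm z < \<rho>} z * ennreal (norm z powr (b - ?n)) \<le> f k z"
      using True k1 by (auto simp: f_def intro!: ennreal_leI)
    also have "\<dots> \<le> (\<Sum>k. f k z)" by (rule ennreal_le_suminf)
    finally show ?thesis .
  qed auto
  have "(\<integral>\<^sup>+z. indicator {z::'a. norm z < \<rho>} z * ennreal (norm z powr (b - ?n)) \<partial>lborel)
        \<le> (\<integral>\<^sup>+z. (\<Sum>k. f k z) \<partial>lborel)"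
    by (intro nn_integral_mono pt)
  also have "\<dots> = (\<Sum>k. integral\<^sup>N lborel (f k))"
    by (intro nn_integral_suminf) (unfold f_def, measurable)
  also have "\<dots> = (\<Sum>k. ennreal (unit_ball_vol ?n * 2 ^ DIM('a) * \<rho> powr b * (2 powr (-b)) ^ k))"
  proof (intro suminf_cong)
    fix k
    have cb: "{z::'a. norm z \<le> r k} = cball 0 (r k)" by auto
    have "integral\<^sup>N lborel (f k) = ennreal (2 ^ DIM('a) * r k powr (b - ?n)) * emeasure lborel (cball (0::'a) (r k))"
      unfolding f_def cb by (subst mult.commute) (simp add: nn_integral_cmult_indicator)
    also have "\<dots> = ennreal (2 ^ DIM('a) * r k powr (b - ?n) * (unit_ball_vol ?n * r k ^ DIM('a)))"
      using rpos[of k] by (simp add: emeasure_cball ennreal_mult' unit_ball_vol_nonneg)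
    also have "2 ^ DIM('a) * r k powr (b - ?n) * (unit_ball_vol ?n * r k ^ DIM('a))
        = unit_ball_vol ?n * 2 ^ DIM('a) * \<rho> powr b * (2 powr (-b)) ^ k"
    proof -
      have a: "r k ^ DIM('a) = r k powr ?n"
        using rpos[of k] by (simp add: powr_realpow)
      have bb: "r k powr (b - ?n) * r k powr ?n = r k powr b"
        by (simp add: powr_add[symmetric])
      have c: "r k powr b = \<rho> powr b * (2 powr (-b)) ^ k"
        using \<rho> by (simp add: r_def powr_divide powr_realpow[symmetric] powr_powr powr_minus_divide
                  flip: powr_power)
      show ?thesis using a bb c by (metis (no_types, lifting) mult.assoc mult.commute)
    qed
    finally show "integral\<^sup>N lborel (f k) = ennreal (unit_ball_vol ?n * 2 ^ DIM('a) * \<rho> powr b * (2 powr (-b)) ^ k)" .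
  qed
  also have "\<dots> = ennreal (unit_ball_vol ?n * 2 ^ DIM('a) * \<rho> powr b / (1 - 2 powr (-b)))"
    using b by (intro geom_ennreal) (auto simp: unit_ball_vol_nonneg intro!: powr_less_one)
  finally show ?thesis by (simp add: field_simps)
qed

lemma nn_integral_translate:
  fixes f :: "'a::euclidean_space \<Rightarrow> ennreal"
  assumes f: "f \<in> borel_measurable borel"
  shows "(\<integral>\<^sup>+x. f (x - y) \<partial>lborel) = (\<integral>\<^sup>+z. f z \<partial>lborel)"
proof -
  have "(\<integral>\<^sup>+z. f z \<partial>lborel) = (\<integral>\<^sup>+z. f z \<partial>(distr lborel borel ((+) (-y))))"
    by (simp add: lborel_distr_plus)
  also have "\<dots> = (\<integral>\<^sup>+x. f (-y + x) \<partial>lborel)"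
    using f by (subst nn_integral_distr) auto
  finally show ?thesis by simp
qed

definition tailC :: "real \<Rightarrow> real \<Rightarrow> real" where
  "tailC n t = unit_ball_vol n * 2 ^ nat \<lceil>n\<rceil> / (1 - 2 powr (-t))"

lemma tailC_pos: "0 < t \<Longrightarrow> 0 \<le> n \<Longrightarrow> 0 \<le> tailC n t"
  unfolding tailC_def
  by (intro divide_nonneg_pos mult_nonneg_nonneg unit_ball_vol_nonneg) (auto intro!: powr_less_one)

lemma tail_integral':
  fixes t \<rho> :: real
  assumes "0 < t" "0 < \<rho>"
  shows "(\<integral>\<^sup>+z. indicator {z::'a::euclidean_space. \<rho> \<le> norm z} z * ennreal (norm z powr (-(real DIM('a) + t))) \<partial>lborel)
         \<le> ennreal (tailC (real DIM('a)) t * \<rho> powr (-t))"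
  using tail_integral[OF assms, where 'a='a] by (simp add: tailC_def)

lemma inner_integral':
  fixes b \<rho> :: real
  assumes "0 < b" "0 < \<rho>"
  shows "(\<integral>\<^sup>+z. indicator {z::'a::euclidean_space. norm z < \<rho>} z * ennreal (norm z powr (b - real DIM('a))) \<partial>lborel)
         \<le> ennreal (tailC (real DIM('a)) b * \<rho> powr b)"
  using inner_integral[OF assms, where 'a='a] by (simp add: tailC_def)

lemma shifted_tail:
  fixes t r R :: real and y :: "'a::euclidean_space"
  assumes t: "0 < t" and "0 < r" "r < R" "norm y < r"
  shows "(\<integral>\<^sup>+x. indicator {x::'a. R \<le> norm x} x * ennreal (norm (x - y) powr (-(real DIM('a) + t))) \<partial>lborel)
         \<le> ennreal (tailC (real DIM('a)) t * (R - r) powr (-t))"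
proof -
  let ?g = "\<lambda>z::'a. indicator {z::'a. R - r \<le> norm z} z * ennreal (norm z powr (-(real DIM('a) + t)))"
  have "(\<integral>\<^sup>+x. indicator {x::'a. R \<le> norm x} x * ennreal (norm (x - y) powr (-(real DIM('a) + t))) \<partial>lborel)
        \<le> (\<integral>\<^sup>+x. ?g (x - y) \<partial>lborel)"
  proof (intro nn_integral_mono)
    fix x :: 'a
    have "R \<le> norm x \<Longrightarrow> R - r \<le> norm (x - y)"
      using assms norm_triangle_ineq2[of x y] by auto
    then show "indicator {x::'a. R \<le> norm x} x * ennreal (norm (x - y) powr (-(real DIM('a) + t))) \<le> ?g (x - y)"
      by (auto simp: indicator_def)
  qed
  also have "\<dots> = integral\<^sup>N lborel ?g"
    by (intro nn_integral_translate) measurable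
  also have "\<dots> \<le> ennreal (tailC (real DIM('a)) t * (R - r) powr (-t))"
    using assms by (intro tail_integral') auto
  finally show ?thesis .
qed

definition cutoff :: "real \<Rightarrow> 'a::euclidean_space \<Rightarrow> real" where
  "cutoff R x = max 0 (min 1 (2 - norm x / R))"

lemma cutoff_bounds: "0 \<le> cutoff R x" "cutoff R x \<le> 1"
  by (auto simp: cutoff_def)

lemma cutoff_one: "0 < R \<Longrightarrow> norm x \<le> R \<Longrightarrow> cutoff R x = 1"
proof -
  assume "0 < R" "norm x \<le> R"
  then have "norm x / R \<le> 1" by simp
  then show ?thesis by (simp add: cutoff_def)
qed

lemma cutoff_zero: "0 < R \<Longrightarrow> 2 * R \<le> norm x \<Longrightarrow> cutoff R x = 0"
proof -
  assume "0 < R" "2 * R \<le> norm x"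
  then have "2 \<le> norm x / R" by (simp add: le_divide_eq)
  then show ?thesis by (simp add: cutoff_def)
qed

lemma cutoff_lip: "0 < R \<Longrightarrow> \<bar>cutoff R x - cutoff R y\<bar> \<le> norm (x - y) / R"
proof -
  assume R: "0 < R"
  have "\<bar>max 0 (min 1 a) - max 0 (min 1 b)\<bar> \<le> \<bar>a - b\<bar>" for a b :: real
    by (auto simp: max_def min_def)
  then have "\<bar>cutoff R x - cutoff R y\<bar> \<le> \<bar>(2 - norm x / R) - (2 - norm y / R)\<bar>"
    unfolding cutoff_def by blast
  also have "\<dots> = \<bar>(norm x - norm y) / R\<bar>" by (simp add: diff_divide_distrib)
  also have "\<dots> = \<bar>norm x - norm y\<bar> / R" using R by simp
  also have "\<dots> \<le> norm (x - y) / R" using R by (intro divide_right_mono norm_triangle_ineq3) auto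
  finally show ?thesis .
qed

lemma cutoff_cont: "0 < R \<Longrightarrow> continuous_on UNIV (cutoff R)"
  unfolding cutoff_def by (intro continuous_intros) auto

lemma cutoff_borel[measurable]: "cutoff R \<in> borel_measurable borel"
  unfolding cutoff_def by measurable

lemma cutoff_kernel_integral:
  fixes p t R :: real and y :: "'a::euclidean_space"
  assumes t: "0 < t" "t < p" and R: "0 < R"
  shows "(\<integral>\<^sup>+x. ennreal (\<bar>cutoff R x - cutoff R y\<bar> powr p * norm (x - y) powr (-(real DIM('a) + t))) \<partial>lborel)
         \<le> ennreal ((tailC (real DIM('a)) (p - t) + tailC (real DIM('a)) t) * R powr (-t))"
proof -
  let ?n = "real DIM('a)"
  let ?g1 = "\<lambda>z::'a. indicator {z::'a. norm z < R} z * ennreal (norm z powr ((p - t) - ?n))"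
  let ?g2 = "\<lambda>z::'a. indicator {z::'a. R \<le> norm z} z * ennreal (norm z powr (-(?n + t)))"
  have "(\<integral>\<^sup>+x. ennreal (\<bar>cutoff R x - cutoff R y\<bar> powr p * norm (x - y) powr (-(?n + t))) \<partial>lborel)
        \<le> (\<integral>\<^sup>+x. ennreal (R powr (-p)) * ?g1 (x - y) + ?g2 (x - y) \<partial>lborel)"
  proof (intro nn_integral_mono)
    fix x :: 'a
    let ?d = "norm (x - y)"
    have lip: "\<bar>cutoff R x - cutoff R y\<bar> \<le> ?d / R" using cutoff_lip[OF R] .
    have le1: "\<bar>cutoff R x - cutoff R y\<bar> \<le> 1"
      using cutoff_bounds[of R x] cutoff_bounds[of R y] by auto
    show "ennreal (\<bar>cutoff R x - cutoff R y\<bar> powr p * ?d powr (-(?n + t)))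
          \<le> ennreal (R powr (-p)) * ?g1 (x - y) + ?g2 (x - y)"
    proof (cases "?d < R")
      case True
      show ?thesis
      proof (cases "x = y")
        case True then show ?thesis by simp
      next
        case False
        then have dpos: "?d > 0" by simp
        have "\<bar>cutoff R x - cutoff R y\<bar> powr p * ?d powr (-(?n + t)) \<le> (?d / R) powr p * ?d powr (-(?n + t))"
          using lip t by (intro mult_right_mono powr_mono2) auto
        also have "\<dots> = R powr (-p) * ?d powr ((p - t) - ?n)"
        proof -
          have e1: "(?d / R) powr p = ?d powr p * R powr (-p)"
            using dpos R by (subst powr_divide) (auto simp: powr_minus_divide)
          have e2: "(p - t) - ?n = p + (-(?n + t))" by simp
          have e3: "?d powr p * ?d powr (-(?n + t)) = ?d powr ((p - t) - ?n)"
            unfolding e2 by (simp add: powr_add)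
          show ?thesis unfolding e1 e3[symmetric] by (simp add: mult_ac)
        qed
        finally have le: "\<bar>cutoff R x - cutoff R y\<bar> powr p * ?d powr (-(?n + t)) \<le> R powr (-p) * ?d powr ((p - t) - ?n)" .
        have g1: "?g1 (x - y) = ennreal (?d powr ((p - t) - ?n))" using True by (simp add: indicator_def)
        have "ennreal (\<bar>cutoff R x - cutoff R y\<bar> powr p * ?d powr (-(?n + t))) \<le> ennreal (R powr (-p) * ?d powr ((p - t) - ?n))"
          using le by (rule ennreal_leI)
        also have "\<dots> = ennreal (R powr (-p)) * ?g1 (x - y)" unfolding g1 by (simp add: ennreal_mult')
        also have "\<dots> \<le> ennreal (R powr (-p)) * ?g1 (x - y) + ?g2 (x - y)" by (rule add_increasing2) auto
        finally show ?thesis .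
      qed
    next
      case False
      have le2: "\<bar>cutoff R x - cutoff R y\<bar> powr p * ?d powr (-(?n + t)) \<le> 1 * ?d powr (-(?n + t))"
        using le1 t by (intro mult_right_mono) (auto intro: powr_le1)
      have g2: "?g2 (x - y) = ennreal (?d powr (-(?n + t)))" using False by (simp add: indicator_def)
      have "ennreal (\<bar>cutoff R x - cutoff R y\<bar> powr p * ?d powr (-(?n + t))) \<le> ?g2 (x - y)"
        unfolding g2 using le2 by (intro ennreal_leI) simp
      also have "\<dots> \<le> ennreal (R powr (-p)) * ?g1 (x - y) + ?g2 (x - y)" by (rule add_increasing) auto
      finally show ?thesis .
    qed
  qed
  also have "\<dots> = ennreal (R powr (-p)) * (\<integral>\<^sup>+x. ?g1 (x - y) \<partial>lborel) + (\<integral>\<^sup>+x. ?g2 (x - y) \<partial>lborel)"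
  proof -
    have "(\<integral>\<^sup>+x. ennreal (R powr (-p)) * ?g1 (x - y) + ?g2 (x - y) \<partial>lborel)
        = (\<integral>\<^sup>+x. ennreal (R powr (-p)) * ?g1 (x - y) \<partial>lborel) + (\<integral>\<^sup>+x. ?g2 (x - y) \<partial>lborel)"
      by (rule nn_integral_add) measurable
    also have "(\<integral>\<^sup>+x. ennreal (R powr (-p)) * ?g1 (x - y) \<partial>lborel) = ennreal (R powr (-p)) * (\<integral>\<^sup>+x. ?g1 (x - y) \<partial>lborel)"
      by (rule nn_integral_cmult) measurable
    finally show ?thesis .
  qed
  also have "\<dots> = ennreal (R powr (-p)) * integral\<^sup>N lborel ?g1 + integral\<^sup>N lborel ?g2"
  proof -
    have "(\<integral>\<^sup>+x. ?g1 (x - y) \<partial>lborel) = integral\<^sup>N lborel ?g1" by (rule nn_integral_translate) measurable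
    moreover have "(\<integral>\<^sup>+x. ?g2 (x - y) \<partial>lborel) = integral\<^sup>N lborel ?g2" by (rule nn_integral_translate) measurable
    ultimately show ?thesis by simp
  qed
  also have "\<dots> \<le> ennreal (R powr (-p)) * ennreal (tailC ?n (p - t) * R powr (p - t))
                 + ennreal (tailC ?n t * R powr (-t))"
    using t R by (intro add_mono mult_left_mono inner_integral' tail_integral') auto
  also have "\<dots> = ennreal ((tailC ?n (p - t) + tailC ?n t) * R powr (-t))"
  proof -
    have e: "-t = -p + (p - t)" by simp
    have "R powr (-p) * (tailC ?n (p - t) * R powr (p - t)) = tailC ?n (p - t) * R powr (-t)"
      unfolding e powr_add by (simp add: mult_ac)
    moreover have "0 \<le> tailC ?n (p - t) * R powr (p - t)" "0 \<le> tailC ?n t * R powr (-t)"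
      "0 \<le> tailC ?n (p - t) * R powr (-t)"
      using t tailC_pos[of "p - t" ?n] tailC_pos[of t ?n] by auto
    ultimately show ?thesis
      by (simp add: ennreal_mult'[symmetric] ennreal_plus[symmetric] distrib_right del: ennreal_plus)
  qed
  finally show ?thesis .
qed

lemma energy_ae_eq:
  assumes N: "N \<in> null_sets lborel" and eq: "\<And>x. x \<notin> N \<Longrightarrow> w x = w' x"
  shows "energyK K p w A = energyK K p w' A"
  unfolding energyK_def
  by (rule nn_integral_cong_AE) (use AE_pair_notin[OF N] in \<open>eventually_elim, auto simp: eq\<close>)

lemma adm_upper:
  assumes "admissible_kernel s p \<alpha> K" "z \<noteq> 0"
  shows "K z \<le> \<alpha> * norm (z::'a::euclidean_space) powr (-(real DIM('a) + s * p))"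
  using assms unfolding admissible_kernel_def by auto

lemma adm_lower:
  assumes "admissible_kernel s p \<alpha> K" "z \<noteq> 0"
  shows "norm z powr (-(real DIM('a) + s * p)) / \<alpha> \<le> K (z::'a::euclidean_space)"
  using assms unfolding admissible_kernel_def by auto

lemma adm_pos:
  assumes "admissible_kernel s p \<alpha> K" "z \<noteq> 0"
  shows "0 < K (z::'a::euclidean_space)"
  using assms unfolding admissible_kernel_def by auto

lemma rel_upper:
  fixes K v :: "'a::euclidean_space \<Rightarrow> real"
  assumes adm: "admissible_kernel s p \<alpha> K" and al: "0 < \<alpha>" and t: "0 < s * p" and p: "0 < p"
    and r: "0 < r" "r < R"
    and vm[measurable]: "v \<in> borel_measurable borel" and v0: "\<And>x. r \<le> norm x \<Longrightarrow> v x = 0"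
  shows "energyK K p v UNIV \<le> energyK K p v (ball 0 R)
          + ennreal (2 * \<alpha> * tailC (real DIM('a)) (s * p) * (R - r) powr (-(s * p))) * (\<integral>\<^sup>+y. ennreal (\<bar>v y\<bar> powr p) \<partial>lborel)"
proof -
  let ?n = "real DIM('a)" and ?t = "s * p"
  let ?k = "\<lambda>z::'a. norm z powr (-(?n + ?t))"
  define F where "F z = ennreal (K (fst z - snd z) * \<bar>v (fst z) - v (snd z)\<bar> powr p)" for z :: "'a \<times> 'a"
  define G1 where "G1 z = indicator {y::'a. norm y < r} (snd z) * indicator {x::'a. R \<le> norm x} (fst z)
      * ennreal (\<alpha> * \<bar>v (snd z)\<bar> powr p * ?k (fst z - snd z))" for z :: "'a \<times> 'a"
  define G2 where "G2 z = indicator {x::'a. norm x < r} (fst z) * indicator {y::'a. R \<le> norm y} (snd z)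
      * ennreal (\<alpha> * \<bar>v (fst z)\<bar> powr p * ?k (fst z - snd z))" for z :: "'a \<times> 'a"
  define C where "C = \<alpha> * tailC ?n ?t * (R - r) powr (-?t)"
  define M where "M = (\<integral>\<^sup>+y. ennreal (\<bar>v y\<bar> powr p) \<partial>lborel)"
  have Cnn: "0 \<le> C" unfolding C_def using al tailC_pos[of ?t ?n] t by auto
  have G1m[measurable]: "G1 \<in> borel_measurable borel" unfolding G1_def borel_prod[symmetric] by measurable
  have G2m[measurable]: "G2 \<in> borel_measurable borel" unfolding G2_def borel_prod[symmetric] by measurable
  have EU: "energyK K p v UNIV = integral\<^sup>N lebesgue F"
    unfolding energyK_def F_def by simp
  have ER: "energyK K p v (ball 0 R) = (\<integral>\<^sup>+z. indicator (ball 0 R \<times> ball 0 R) z * F z \<partial>lebesgue)"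
    unfolding energyK_def F_def by simp
  have pt: "F z \<le> indicator (ball 0 R \<times> ball 0 R) z * F z + (G1 z + G2 z)" for z
  proof (cases z)
    case (Pair x y)
    show ?thesis
    proof (cases "z \<in> ball 0 R \<times> ball 0 R")
      case True then show ?thesis by simp
    next
      case False
      then have xy: "R \<le> norm x \<or> R \<le> norm y" using Pair by (auto simp: mem_Times_iff)
      show ?thesis
      proof (cases "R \<le> norm x")
        case True
        have vx: "v x = 0" using v0[of x] True r by auto
        show ?thesis
        proof (cases "norm y < r")
          case yin: True
          have xy0: "x - y \<noteq> 0" using True yin r by auto
          have "K (x - y) * \<bar>v x - v y\<bar> powr p \<le> \<alpha> * ?k (x - y) * \<bar>v y\<bar> powr p"
            using adm_upper[OF adm xy0] vx by (simp add: mult_right_mono)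
          also have "\<dots> = \<alpha> * \<bar>v y\<bar> powr p * ?k (x - y)" by (simp add: mult_ac)
          finally have le: "K (x - y) * \<bar>v x - v y\<bar> powr p \<le> \<alpha> * \<bar>v y\<bar> powr p * ?k (x - y)" .
          have g: "G1 z = ennreal (\<alpha> * \<bar>v y\<bar> powr p * ?k (x - y))"
            using Pair True yin by (simp add: G1_def)
          have "F z \<le> G1 z" unfolding g using le Pair by (simp add: F_def ennreal_leI)
          also have "G1 z \<le> G1 z + G2 z" by (rule add_increasing2) auto
          also have "G1 z + G2 z \<le> indicator (ball 0 R \<times> ball 0 R) z * F z + (G1 z + G2 z)" by (rule add_increasing) auto
          finally show ?thesis .
        next
          case False
          then have "F z = 0" using Pair vx v0[of y] p by (simp add: F_def)
          then show ?thesis by simp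
        qed
      next
        case False
        then have True': "R \<le> norm y" using xy by auto
        have vy: "v y = 0" using v0[of y] True' r by auto
        show ?thesis
        proof (cases "norm x < r")
          case xin: True
          have xy0: "x - y \<noteq> 0" using True' xin r by auto
          have "K (x - y) * \<bar>v x - v y\<bar> powr p \<le> \<alpha> * ?k (x - y) * \<bar>v x\<bar> powr p"
            using adm_upper[OF adm xy0] vy by (simp add: mult_right_mono)
          also have "\<dots> = \<alpha> * \<bar>v x\<bar> powr p * ?k (x - y)" by (simp add: mult_ac)
          finally have le: "K (x - y) * \<bar>v x - v y\<bar> powr p \<le> \<alpha> * \<bar>v x\<bar> powr p * ?k (x - y)" .
          have g: "G2 z = ennreal (\<alpha> * \<bar>v x\<bar> powr p * ?k (x - y))"
            using Pair True' xin by (simp add: G2_def)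
          have "F z \<le> G2 z" unfolding g using le Pair by (simp add: F_def ennreal_leI)
          also have "G2 z \<le> G1 z + G2 z" by (rule add_increasing) auto
          also have "G1 z + G2 z \<le> indicator (ball 0 R \<times> ball 0 R) z * F z + (G1 z + G2 z)" by (rule add_increasing) auto
          finally show ?thesis .
        next
          case False
          then have "F z = 0" using Pair vy v0[of x] p by (simp add: F_def)
          then show ?thesis by simp
        qed
      qed
    qed
  qed
  have "integral\<^sup>N lebesgue F \<le> (\<integral>\<^sup>+z. indicator (ball 0 R \<times> ball 0 R) z * F z + (G1 z + G2 z) \<partial>lebesgue)"
    by (intro nn_integral_mono pt)
  also have "\<dots> \<le> (\<integral>\<^sup>+z. indicator (ball 0 R \<times> ball 0 R) z * F z \<partial>lebesgue) + (\<integral>\<^sup>+z. G1 z + G2 z \<partial>lebesgue)"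
    by (rule nn_integral_add_le, rule measurable_completion) (simp add: measurable_lborel1)
  also have "(\<integral>\<^sup>+z. G1 z + G2 z \<partial>lebesgue) = integral\<^sup>N lebesgue G1 + integral\<^sup>N lebesgue G2"
    by (rule nn_integral_add; rule measurable_completion) (simp_all add: measurable_lborel1)
  also have "integral\<^sup>N lebesgue G1 \<le> ennreal C * M"
  proof -
    have "integral\<^sup>N lebesgue G1 = (\<integral>\<^sup>+y. \<integral>\<^sup>+x. G1 (x, y) \<partial>lborel \<partial>lborel)"
      by (rule tonelli_snd) measurable
    also have "\<dots> \<le> (\<integral>\<^sup>+y. ennreal C * ennreal (\<bar>v y\<bar> powr p) \<partial>lborel)"
    proof (intro nn_integral_mono)
      fix y :: 'a
      show "(\<integral>\<^sup>+x. G1 (x, y) \<partial>lborel) \<le> ennreal C * ennreal (\<bar>v y\<bar> powr p)"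
      proof (cases "norm y < r")
        case True
        have "(\<integral>\<^sup>+x. G1 (x, y) \<partial>lborel) = (\<integral>\<^sup>+x. ennreal (\<alpha> * \<bar>v y\<bar> powr p) * (indicator {x::'a. R \<le> norm x} x * ennreal (?k (x - y))) \<partial>lborel)"
          using True al by (intro nn_integral_cong) (auto simp: G1_def ennreal_mult' mult_ac)
        also have "\<dots> = ennreal (\<alpha> * \<bar>v y\<bar> powr p) * (\<integral>\<^sup>+x. indicator {x::'a. R \<le> norm x} x * ennreal (?k (x - y)) \<partial>lborel)"
          by (rule nn_integral_cmult) measurable
        also have "\<dots> \<le> ennreal (\<alpha> * \<bar>v y\<bar> powr p) * ennreal (tailC ?n ?t * (R - r) powr (-?t))"
          using shifted_tail[OF t r(1) r(2) True] by (intro mult_left_mono) auto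
        also have "\<dots> = ennreal C * ennreal (\<bar>v y\<bar> powr p)"
          using al by (simp add: C_def ennreal_mult'[symmetric] mult_ac tailC_pos t)
        finally show ?thesis .
      next
        case False
        then show ?thesis by (simp add: G1_def)
      qed
    qed
    also have "\<dots> = ennreal C * M" unfolding M_def by (rule nn_integral_cmult) measurable
    finally show ?thesis .
  qed
  also have "integral\<^sup>N lebesgue G2 \<le> ennreal C * M"
  proof -
    have "integral\<^sup>N lebesgue G2 = (\<integral>\<^sup>+x. \<integral>\<^sup>+y. G2 (x, y) \<partial>lborel \<partial>lborel)"
      by (rule tonelli_fst) measurable
    also have "\<dots> \<le> (\<integral>\<^sup>+x. ennreal C * ennreal (\<bar>v x\<bar> powr p) \<partial>lborel)"
    proof (intro nn_integral_mono)
      fix x :: 'a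
      show "(\<integral>\<^sup>+y. G2 (x, y) \<partial>lborel) \<le> ennreal C * ennreal (\<bar>v x\<bar> powr p)"
      proof (cases "norm x < r")
        case True
        have "(\<integral>\<^sup>+y. G2 (x, y) \<partial>lborel) = (\<integral>\<^sup>+y. ennreal (\<alpha> * \<bar>v x\<bar> powr p) * (indicator {y::'a. R \<le> norm y} y * ennreal (?k (y - x))) \<partial>lborel)"
          using True al by (intro nn_integral_cong) (auto simp: G2_def ennreal_mult' mult_ac norm_minus_commute)
        also have "\<dots> = ennreal (\<alpha> * \<bar>v x\<bar> powr p) * (\<integral>\<^sup>+y. indicator {y::'a. R \<le> norm y} y * ennreal (?k (y - x)) \<partial>lborel)"
          by (rule nn_integral_cmult) measurable
        also have "\<dots> \<le> ennreal (\<alpha> * \<bar>v x\<bar> powr p) * ennreal (tailC ?n ?t * (R - r) powr (-?t))"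
          using shifted_tail[OF t r(1) r(2) True] by (intro mult_left_mono) auto
        also have "\<dots> = ennreal C * ennreal (\<bar>v x\<bar> powr p)"
          using al by (simp add: C_def ennreal_mult'[symmetric] mult_ac tailC_pos t)
        finally show ?thesis .
      next
        case False
        then show ?thesis by (simp add: G2_def)
      qed
    qed
    also have "\<dots> = ennreal C * M" unfolding M_def by (rule nn_integral_cmult) measurable
    finally show ?thesis .
  qed
  finally have "integral\<^sup>N lebesgue F \<le> energyK K p v (ball 0 R) + (ennreal C * M + ennreal C * M)"
    unfolding ER by (simp add: add_mono)
  also have "ennreal C * M + ennreal C * M = ennreal (2 * \<alpha> * tailC ?n ?t * (R - r) powr (-?t)) * M"
  proof -
    have e: "2 * \<alpha> * tailC ?n ?t * (R - r) powr (-?t) = C + C" by (simp add: C_def)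
    have "ennreal (2 * \<alpha> * tailC ?n ?t * (R - r) powr (-?t)) = ennreal C + ennreal C"
      unfolding e by (rule ennreal_plus[OF Cnn Cnn])
    then show ?thesis by (simp add: distrib_right)
  qed
  finally show ?thesis unfolding EU M_def .
qed

lemma annulus_measure:
  assumes r: "0 < r"
  shows "emeasure lborel {x::'a::euclidean_space. r \<le> norm x \<and> norm x < 2 * r}
       = ennreal (unit_ball_vol (real DIM('a)) * ((2 * r) ^ DIM('a) - r ^ DIM('a)))"
proof -
  have e: "{x::'a. r \<le> norm x \<and> norm x < 2 * r} = ball 0 (2 * r) - ball 0 r" by auto
  have "emeasure lborel (ball (0::'a) (2 * r) - ball 0 r) = emeasure lborel (ball (0::'a) (2 * r)) - emeasure lborel (ball (0::'a) r)"
    using r emeasure_lborel_ball_finite[of "0::'a" r] by (intro emeasure_Diff) auto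
  also have "\<dots> = ennreal (unit_ball_vol (real DIM('a)) * (2 * r) ^ DIM('a)) - ennreal (unit_ball_vol (real DIM('a)) * r ^ DIM('a))"
    using r by (simp add: emeasure_ball)
  also have "\<dots> = ennreal (unit_ball_vol (real DIM('a)) * ((2 * r) ^ DIM('a) - r ^ DIM('a)))"
    using r by (subst ennreal_minus) (auto simp: unit_ball_vol_nonneg right_diff_distrib)
  finally show ?thesis unfolding e .
qed

lemma rel_lower:
  fixes K v :: "'a::euclidean_space \<Rightarrow> real"
  assumes adm: "admissible_kernel s p \<alpha> K" and al: "0 < \<alpha>" and t: "0 < s * p" and p: "0 < p"
    and r: "0 < r" "2 * r \<le> R"
    and vm[measurable]: "v \<in> borel_measurable borel" and v0: "\<And>x. r \<le> norm x \<Longrightarrow> v x = 0"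
  shows "ennreal ((3 * r) powr (-(real DIM('a) + s * p)) / \<alpha> * (unit_ball_vol (real DIM('a)) * ((2 * r) ^ DIM('a) - r ^ DIM('a))))
           * (\<integral>\<^sup>+y. ennreal (\<bar>v y\<bar> powr p) \<partial>lborel) \<le> energyK K p v (ball 0 R)"
proof -
  let ?n = "real DIM('a)" and ?t = "s * p"
  define c where "c = (3 * r) powr (-(?n + ?t)) / \<alpha>"
  define ann where "ann = unit_ball_vol ?n * ((2 * r) ^ DIM('a) - r ^ DIM('a))"
  define Ann where "Ann = {x::'a. r \<le> norm x \<and> norm x < 2 * r}"
  have cnn: "0 \<le> c" using al by (simp add: c_def)
  have annnn: "0 \<le> ann" unfolding ann_def using r
    by (intro mult_nonneg_nonneg unit_ball_vol_nonneg) (auto intro!: power_mono)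
  define F where "F z = ennreal (K (fst z - snd z) * \<bar>v (fst z) - v (snd z)\<bar> powr p)" for z :: "'a \<times> 'a"
  define H where "H z = indicator {y::'a. norm y < r} (snd z) * indicator Ann (fst z) * ennreal (c * \<bar>v (snd z)\<bar> powr p)" for z :: "'a \<times> 'a"
  have am: "emeasure lborel Ann = ennreal ann" unfolding Ann_def ann_def by (rule annulus_measure[OF r(1)])
  have Hm[measurable]: "H \<in> borel_measurable borel" unfolding H_def Ann_def borel_prod[symmetric] by measurable
  have ER: "energyK K p v (ball 0 R) = (\<integral>\<^sup>+z. indicator (ball 0 R \<times> ball 0 R) z * F z \<partial>lebesgue)"
    unfolding energyK_def F_def by simp
  have pt: "H z \<le> indicator (ball 0 R \<times> ball 0 R) z * F z" for z
  proof (cases z)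
    case (Pair x y)
    show ?thesis
    proof (cases "norm y < r \<and> x \<in> Ann")
      case True
      then have x: "r \<le> norm x" "norm x < 2 * r" and y: "norm y < r" by (auto simp: Ann_def)
      have xy0: "x - y \<noteq> 0" using x y by auto
      have dle: "norm (x - y) \<le> 3 * r" using norm_triangle_ineq4[of x y] x y by auto
      have "c \<le> norm (x - y) powr (-(?n + ?t)) / \<alpha>"
        unfolding c_def using al dle xy0 t by (intro divide_right_mono powr_mono2') auto
      also have "\<dots> \<le> K (x - y)" by (rule adm_lower[OF adm xy0])
      finally have cK: "c \<le> K (x - y)" .
      have vx: "v x = 0" using v0 x by auto
      have "c * \<bar>v y\<bar> powr p \<le> K (x - y) * \<bar>v x - v y\<bar> powr p"
        using cK vx by (simp add: mult_right_mono)
      moreover have "z \<in> ball 0 R \<times> ball 0 R" using Pair x y r by auto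
      ultimately show ?thesis using Pair True by (simp add: H_def F_def ennreal_leI)
    next
      case False
      then show ?thesis using Pair by (auto simp: H_def)
    qed
  qed
  have "(\<integral>\<^sup>+z. H z \<partial>lebesgue) = (\<integral>\<^sup>+y. \<integral>\<^sup>+x. H (x, y) \<partial>lborel \<partial>lborel)"
    by (rule tonelli_snd) measurable
  also have "\<dots> = (\<integral>\<^sup>+y. ennreal (c * ann) * ennreal (\<bar>v y\<bar> powr p) \<partial>lborel)"
  proof (intro nn_integral_cong)
    fix y :: 'a
    have "(\<integral>\<^sup>+x. H (x, y) \<partial>lborel) = (\<integral>\<^sup>+x. (indicator {y::'a. norm y < r} y * ennreal (c * \<bar>v y\<bar> powr p)) * indicator Ann x \<partial>lborel)"
      by (intro nn_integral_cong) (simp add: H_def mult_ac)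
    also have "\<dots> = (indicator {y::'a. norm y < r} y * ennreal (c * \<bar>v y\<bar> powr p)) * emeasure lborel Ann"
      by (subst nn_integral_cmult) (auto simp: Ann_def)
    also have "\<dots> = ennreal (c * ann) * ennreal (\<bar>v y\<bar> powr p)"
    proof (cases "norm y < r")
      case True
      then show ?thesis using cnn annnn
        by (simp add: am ennreal_mult'[symmetric] mult_ac)
    next
      case False
      then show ?thesis using v0[of y] p by simp
    qed
    finally show "(\<integral>\<^sup>+x. H (x, y) \<partial>lborel) = ennreal (c * ann) * ennreal (\<bar>v y\<bar> powr p)" .
  qed
  also have "\<dots> = ennreal (c * ann) * (\<integral>\<^sup>+y. ennreal (\<bar>v y\<bar> powr p) \<partial>lborel)"
    by (rule nn_integral_cmult) measurable
  finally have eq: "(\<integral>\<^sup>+z. H z \<partial>lebesgue) = ennreal (c * ann) * (\<integral>\<^sup>+y. ennreal (\<bar>v y\<bar> powr p) \<partial>lborel)" .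
  have "(\<integral>\<^sup>+z. H z \<partial>lebesgue) \<le> energyK K p v (ball 0 R)"
    unfolding ER by (intro nn_integral_mono pt)
  then show ?thesis unfolding eq c_def ann_def .
qed

lemma rel_bound_borel:
  fixes s p \<alpha> :: real
  assumes al: "0 < \<alpha>" and t: "0 < s * p" and p: "0 < p"
  shows "\<exists>C>0. \<forall>(K::'a::euclidean_space \<Rightarrow> real) v r R. admissible_kernel s p \<alpha> K \<longrightarrow>
     v \<in> borel_measurable borel \<longrightarrow> (\<forall>x. r \<le> norm x \<longrightarrow> v x = 0) \<longrightarrow> 0 < r \<longrightarrow> 2 * r \<le> R \<longrightarrow>
     energyK K p v UNIV \<le> ennreal (1 + C * (r powr (s * p) / (R - r) powr (s * p))) * energyK K p v (ball 0 R)"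
proof -
  let ?n = "real DIM('a)" and ?t = "s * p"
  define c3 where "c3 = 3 powr (-(?n + ?t)) / \<alpha> * (unit_ball_vol ?n * (2 ^ DIM('a) - 1))"
  define C where "C = 2 * \<alpha> * tailC ?n ?t / c3"
  have two: "(1::real) < 2 ^ DIM('a)"
    using DIM_positive[where 'a='a] by (intro one_less_power) auto
  have c3pos: "0 < c3" unfolding c3_def using al two by (intro mult_pos_pos divide_pos_pos) auto
  have tC: "0 \<le> tailC ?n ?t" using tailC_pos[OF t] by simp
  have Cnn: "0 \<le> C" unfolding C_def using c3pos al tC by auto
  show ?thesis
  proof (intro exI[of _ "C + 1"] conjI allI impI)
    show "0 < C + 1" using Cnn by simp
    fix K :: "'a \<Rightarrow> real" and v :: "'a \<Rightarrow> real" and r R :: real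
    assume adm: "admissible_kernel s p \<alpha> K" and vm: "v \<in> borel_measurable borel"
      and v0: "\<forall>x. r \<le> norm x \<longrightarrow> v x = 0" and r: "0 < r" and rR: "2 * r \<le> R"
    have Rr: "0 < R - r" using r rR by simp
    let ?M = "\<integral>\<^sup>+y. ennreal (\<bar>v y\<bar> powr p) \<partial>lborel"
    define L where "L = (3 * r) powr (-(?n + ?t)) / \<alpha> * (unit_ball_vol ?n * ((2 * r) ^ DIM('a) - r ^ DIM('a)))"
    define U where "U = 2 * \<alpha> * tailC ?n ?t * (R - r) powr (-?t)"
    define \<theta> where "\<theta> = r powr ?t / (R - r) powr ?t"
    have thnn: "0 \<le> \<theta>" by (simp add: \<theta>_def)
    have lower: "ennreal L * ?M \<le> energyK K p v (ball 0 R)"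
      unfolding L_def using rel_lower[OF adm al t p r rR vm] v0 by auto
    have upper: "energyK K p v UNIV \<le> energyK K p v (ball 0 R) + ennreal U * ?M"
      unfolding U_def using rel_upper[OF adm al t p r _ vm] v0 r rR by auto
    have Leq: "L = c3 * r powr (-?t)"
    proof -
      have a: "(3 * r) powr (-(?n + ?t)) = 3 powr (-(?n + ?t)) * r powr (-(?n + ?t))"
        using r by (simp add: powr_mult)
      have b: "(2 * r) ^ DIM('a) - r ^ DIM('a) = (2 ^ DIM('a) - 1) * r powr ?n"
        using r by (simp add: power_mult_distrib powr_realpow algebra_simps)
      have c: "r powr (-(?n + ?t)) * r powr ?n = r powr (-?t)"
        by (simp add: powr_add[symmetric])
      show ?thesis unfolding L_def c3_def a b
        using c by (simp add: mult_ac)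
    qed
    have Ueq: "U = (C * \<theta>) * L"
    proof -
      have "r powr ?t * r powr (-?t) = 1" using r by (simp add: powr_add[symmetric])
      moreover have "(R - r) powr (-?t) = 1 / (R - r) powr ?t" by (simp add: powr_minus_divide)
      ultimately show ?thesis unfolding U_def C_def \<theta>_def Leq using c3pos
        by (simp add: field_simps)
    qed
    have "ennreal U * ?M = ennreal (C * \<theta>) * (ennreal L * ?M)"
    proof -
      have Lnn: "0 \<le> L" unfolding Leq using c3pos by simp
      have "ennreal ((C * \<theta>) * L) = ennreal (C * \<theta>) * ennreal L" using Cnn thnn Lnn by (simp add: ennreal_mult)
      then show ?thesis unfolding Ueq by (simp add: mult.assoc)
    qed
    also have "\<dots> \<le> ennreal (C * \<theta>) * energyK K p v (ball 0 R)"
      by (intro mult_left_mono lower) auto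
    finally have "energyK K p v UNIV \<le> energyK K p v (ball 0 R) + ennreal (C * \<theta>) * energyK K p v (ball 0 R)"
      using upper by (meson add_left_mono order_trans)
    also have "\<dots> = ennreal (1 + C * \<theta>) * energyK K p v (ball 0 R)"
      using Cnn thnn by (simp add: ennreal_plus distrib_right)
    also have "\<dots> \<le> ennreal (1 + (C + 1) * \<theta>) * energyK K p v (ball 0 R)"
      using thnn Cnn by (intro mult_right_mono ennreal_leI) (auto simp: distrib_right)
    finally show "energyK K p v UNIV \<le> ennreal (1 + (C + 1) * (r powr (s * p) / (R - r) powr (s * p))) * energyK K p v (ball 0 R)"
      unfolding \<theta>_def .
  qed
qed

lemma cut_energy:
  fixes k w w' :: "'a::euclidean_space \<Rightarrow> real"
  assumes N: "N \<in> null_sets lborel" and ww: "\<And>x. x \<notin> N \<Longrightarrow> w x = w' x"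
    and wm[measurable]: "w' \<in> borel_measurable borel"
    and kpos: "\<And>z. z \<noteq> 0 \<Longrightarrow> 0 \<le> k z"
    and kle: "\<And>z. z \<noteq> 0 \<Longrightarrow> k z \<le> \<beta> * norm z powr (-(real DIM('a) + t))"
    and \<beta>: "0 \<le> \<beta>" and l: "0 < l" "l < 1" and p: "1 \<le> p" and t: "0 < t" "t < p" and R: "0 < R"
  shows "(\<integral>\<^sup>+z. ennreal (k (fst z - snd z) * \<bar>cutoff R (fst z) * w (fst z) - cutoff R (snd z) * w (snd z)\<bar> powr p) \<partial>lebesgue)
     \<le> ennreal (l powr (1 - p)) * (\<integral>\<^sup>+z. ennreal (k (fst z - snd z) * \<bar>w (fst z) - w (snd z)\<bar> powr p) \<partial>lebesgue)
       + ennreal ((1 - l) powr (1 - p) * \<beta> * (tailC (real DIM('a)) (p - t) + tailC (real DIM('a)) t) * R powr (-t))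
         * (\<integral>\<^sup>+y. ennreal (\<bar>w y\<bar> powr p) \<partial>lborel)"
proof -
  let ?n = "real DIM('a)"
  let ?k = "\<lambda>z::'a. norm z powr (-(?n + t))"
  let ?\<phi> = "cutoff R"
  define a where "a = (1 - l) powr (1 - p) * \<beta>"
  define Cp where "Cp = tailC ?n (p - t) + tailC ?n t"
  have ann: "0 \<le> a" using \<beta> by (simp add: a_def)
  have Cpnn: "0 \<le> Cp" unfolding Cp_def using t tailC_pos[of "p - t" ?n] tailC_pos[of t ?n] by auto
  define Fv where "Fv z = ennreal (k (fst z - snd z) * \<bar>?\<phi> (fst z) * w (fst z) - ?\<phi> (snd z) * w (snd z)\<bar> powr p)" for z :: "'a \<times> 'a"
  define Fw where "Fw z = ennreal (k (fst z - snd z) * \<bar>w (fst z) - w (snd z)\<bar> powr p)" for z :: "'a \<times> 'a"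
  define G where "G z = ennreal (a * \<bar>w' (snd z)\<bar> powr p * (\<bar>?\<phi> (fst z) - ?\<phi> (snd z)\<bar> powr p * ?k (fst z - snd z)))" for z :: "'a \<times> 'a"
  have Gm[measurable]: "G \<in> borel_measurable borel" unfolding G_def borel_prod[symmetric] by measurable
  have ae: "AE z in lebesgue. Fv z \<le> ennreal (l powr (1 - p)) * Fw z + G z"
    using AE_pair_notin[OF N]
  proof eventually_elim
    case (elim z)
    obtain x y where z: "z = (x, y)" by (cases z)
    have wy: "w y = w' y" using elim z ww by auto
    show ?case
    proof (cases "x = y")
      case True then show ?thesis using z p by (simp add: Fv_def)
    next
      case False
      then have xy0: "x - y \<noteq> 0" by simp
      define A where "A = ?\<phi> x * (w x - w y)"
      define B where "B = w y * (?\<phi> x - ?\<phi> y)"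
      have split: "?\<phi> x * w x - ?\<phi> y * w y = A + B" by (simp add: A_def B_def algebra_simps)
      have Ale: "\<bar>A\<bar> powr p \<le> \<bar>w x - w y\<bar> powr p"
        unfolding A_def using cutoff_bounds[of R x] p
        by (intro powr_mono2) (auto simp: abs_mult intro: mult_left_le_one_le)
      have Beq: "\<bar>B\<bar> powr p = \<bar>w' y\<bar> powr p * \<bar>?\<phi> x - ?\<phi> y\<bar> powr p"
        unfolding B_def wy by (simp add: abs_mult powr_mult)
      have kk: "0 \<le> k (x - y)" "k (x - y) \<le> \<beta> * ?k (x - y)" using kpos[OF xy0] kle[OF xy0] by auto
      have "k (x - y) * \<bar>A + B\<bar> powr p \<le> k (x - y) * (l powr (1 - p) * \<bar>A\<bar> powr p + (1 - l) powr (1 - p) * \<bar>B\<bar> powr p)"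
        using convex_split[OF l p, of A B] kk by (intro mult_left_mono) auto
      also have "\<dots> \<le> l powr (1 - p) * (k (x - y) * \<bar>w x - w y\<bar> powr p) + (1 - l) powr (1 - p) * (\<beta> * ?k (x - y) * \<bar>B\<bar> powr p)"
      proof -
        have "k (x - y) * (l powr (1 - p) * \<bar>A\<bar> powr p) \<le> l powr (1 - p) * (k (x - y) * \<bar>w x - w y\<bar> powr p)"
          using Ale kk by (simp add: mult_left_mono mult.left_commute)
        moreover have "k (x - y) * ((1 - l) powr (1 - p) * \<bar>B\<bar> powr p) \<le> (1 - l) powr (1 - p) * (\<beta> * ?k (x - y) * \<bar>B\<bar> powr p)"
        proof -
          have "k (x - y) * \<bar>B\<bar> powr p \<le> \<beta> * ?k (x - y) * \<bar>B\<bar> powr p"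
            using kk by (intro mult_right_mono) auto
          then have "(1 - l) powr (1 - p) * (k (x - y) * \<bar>B\<bar> powr p) \<le> (1 - l) powr (1 - p) * (\<beta> * ?k (x - y) * \<bar>B\<bar> powr p)"
            by (rule mult_left_mono) simp
          then show ?thesis by (simp add: mult_ac)
        qed
        ultimately show ?thesis by (simp add: distrib_left)
      qed
      also have "(1 - l) powr (1 - p) * (\<beta> * ?k (x - y) * \<bar>B\<bar> powr p) = a * \<bar>w' y\<bar> powr p * (\<bar>?\<phi> x - ?\<phi> y\<bar> powr p * ?k (x - y))"
        unfolding Beq a_def by (simp add: mult_ac)
      finally have le: "k (x - y) * \<bar>A + B\<bar> powr p \<le> l powr (1 - p) * (k (x - y) * \<bar>w x - w y\<bar> powr p) + a * \<bar>w' y\<bar> powr p * (\<bar>?\<phi> x - ?\<phi> y\<bar> powr p * ?k (x - y))" .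
      have "Fv z = ennreal (k (x - y) * \<bar>A + B\<bar> powr p)" unfolding Fv_def z using split by simp
      also have "\<dots> \<le> ennreal (l powr (1 - p) * (k (x - y) * \<bar>w x - w y\<bar> powr p) + a * \<bar>w' y\<bar> powr p * (\<bar>?\<phi> x - ?\<phi> y\<bar> powr p * ?k (x - y)))"
        by (rule ennreal_leI[OF le])
      also have "\<dots> = ennreal (l powr (1 - p)) * Fw z + G z"
        unfolding Fw_def G_def z using kk ann
        by (simp add: ennreal_plus ennreal_mult)
      finally show ?thesis .
    qed
  qed
  have "integral\<^sup>N lebesgue Fv \<le> (\<integral>\<^sup>+z. ennreal (l powr (1 - p)) * Fw z + G z \<partial>lebesgue)"
    by (rule nn_integral_mono_AE[OF ae])
  also have "\<dots> \<le> (\<integral>\<^sup>+z. ennreal (l powr (1 - p)) * Fw z \<partial>lebesgue) + integral\<^sup>N lebesgue G"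
    by (rule nn_integral_add_le, rule measurable_completion) (simp add: measurable_lborel1)
  also have "(\<integral>\<^sup>+z. ennreal (l powr (1 - p)) * Fw z \<partial>lebesgue) \<le> ennreal (l powr (1 - p)) * integral\<^sup>N lebesgue Fw"
    by (rule nn_integral_cmult_le) simp
  also have "integral\<^sup>N lebesgue G \<le> ennreal (a * Cp * R powr (-t)) * (\<integral>\<^sup>+y. ennreal (\<bar>w y\<bar> powr p) \<partial>lborel)"
  proof -
    have "integral\<^sup>N lebesgue G = (\<integral>\<^sup>+y. \<integral>\<^sup>+x. G (x, y) \<partial>lborel \<partial>lborel)"
      by (rule tonelli_snd) measurable
    also have "\<dots> \<le> (\<integral>\<^sup>+y. ennreal (a * Cp * R powr (-t)) * ennreal (\<bar>w' y\<bar> powr p) \<partial>lborel)"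
    proof (intro nn_integral_mono)
      fix y :: 'a
      have "(\<integral>\<^sup>+x. G (x, y) \<partial>lborel) = (\<integral>\<^sup>+x. ennreal (a * \<bar>w' y\<bar> powr p) * ennreal (\<bar>?\<phi> x - ?\<phi> y\<bar> powr p * ?k (x - y)) \<partial>lborel)"
        using ann by (intro nn_integral_cong) (simp add: G_def ennreal_mult)
      also have "\<dots> = ennreal (a * \<bar>w' y\<bar> powr p) * (\<integral>\<^sup>+x. ennreal (\<bar>?\<phi> x - ?\<phi> y\<bar> powr p * ?k (x - y)) \<partial>lborel)"
        by (rule nn_integral_cmult) measurable
      also have "\<dots> \<le> ennreal (a * \<bar>w' y\<bar> powr p) * ennreal (Cp * R powr (-t))"
        unfolding Cp_def by (intro mult_left_mono cutoff_kernel_integral t R) auto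
      also have "\<dots> = ennreal (a * Cp * R powr (-t)) * ennreal (\<bar>w' y\<bar> powr p)"
        using ann Cpnn by (simp add: ennreal_mult[symmetric] mult_ac)
      finally show "(\<integral>\<^sup>+x. G (x, y) \<partial>lborel) \<le> ennreal (a * Cp * R powr (-t)) * ennreal (\<bar>w' y\<bar> powr p)" .
    qed
    also have "\<dots> = ennreal (a * Cp * R powr (-t)) * (\<integral>\<^sup>+y. ennreal (\<bar>w' y\<bar> powr p) \<partial>lborel)"
      by (rule nn_integral_cmult) measurable
    also have "(\<integral>\<^sup>+y. ennreal (\<bar>w' y\<bar> powr p) \<partial>lborel) = (\<integral>\<^sup>+y. ennreal (\<bar>w y\<bar> powr p) \<partial>lborel)"
      by (rule nn_integral_cong_AE) (use AE_not_in[OF N] in \<open>eventually_elim, simp add: ww\<close>)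
    finally show ?thesis .
  qed
  finally show ?thesis unfolding Fv_def Fw_def a_def Cp_def by (simp add: mult_ac)
qed

lemma seminorm_form:
  fixes d :: "'a::euclidean_space"
  shows "ennreal (a / norm d powr (real DIM('a) + t))
       = ennreal (norm d powr (-(real DIM('a) + t)) * a)"
proof -
  have "norm d powr (-(real DIM('a) + t)) = inverse (norm d powr (real DIM('a) + t))"
    by (rule powr_minus)
  then show ?thesis by (simp add: divide_inverse mult.commute)
qed

lemma cutoff_lebesgue[measurable]: "cutoff R \<in> borel_measurable lebesgue"
  by (rule measurable_completion) (simp add: measurable_lborel1)

lemma cut_sobolev:
  fixes w :: "'a::euclidean_space \<Rightarrow> real"
  assumes w: "w \<in> frac_sobolev s p" and p: "1 < p" and s: "s < 1" and t: "0 < s * p" and R: "0 < R"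
  shows "(\<lambda>x. cutoff R x * w x) \<in> frac_sobolev s p"
proof -
  let ?n = "real DIM('a)" and ?t = "s * p"
  have wm[measurable]: "w \<in> borel_measurable lebesgue"
    and wL: "(\<integral>\<^sup>+ x. ennreal (\<bar>w x\<bar> powr p) \<partial>lebesgue) < \<infinity>"
    and wS: "(\<integral>\<^sup>+ z. ennreal (\<bar>w (fst z) - w (snd z)\<bar> powr p /
          norm (fst z - snd z) powr (?n + ?t)) \<partial>(lebesgue :: ('a \<times> 'a) measure)) < \<infinity>"
    using w unfolding frac_sobolev_def by auto
  obtain w' N where w'[measurable]: "w' \<in> borel_measurable borel" and N: "N \<in> null_sets lborel"
    and ww: "\<And>x. x \<notin> N \<Longrightarrow> w x = w' x"
    using borel_version[OF wm] by blast
  have tp: "?t < p" using s p t by simp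
  have L: "(\<integral>\<^sup>+ x. ennreal (\<bar>cutoff R x * w x\<bar> powr p) \<partial>lebesgue) < \<infinity>"
  proof -
    have "(\<integral>\<^sup>+ x. ennreal (\<bar>cutoff R x * w x\<bar> powr p) \<partial>lebesgue) \<le> (\<integral>\<^sup>+ x. ennreal (\<bar>w x\<bar> powr p) \<partial>lebesgue)"
    proof (intro nn_integral_mono ennreal_leI powr_mono2)
      fix x
      show "\<bar>cutoff R x * w x\<bar> \<le> \<bar>w x\<bar>"
        using cutoff_bounds[of R x] by (auto simp: abs_mult intro: mult_left_le_one_le)
    qed (use p in auto)
    then show ?thesis using wL by (simp add: order_le_less_trans)
  qed
  have S: "(\<integral>\<^sup>+ z. ennreal (\<bar>cutoff R (fst z) * w (fst z) - cutoff R (snd z) * w (snd z)\<bar> powr p /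
          norm (fst z - snd z) powr (?n + ?t)) \<partial>(lebesgue :: ('a \<times> 'a) measure)) < \<infinity>"
  proof -
    have "(\<integral>\<^sup>+ z. ennreal (\<bar>cutoff R (fst z) * w (fst z) - cutoff R (snd z) * w (snd z)\<bar> powr p /
          norm (fst z - snd z) powr (?n + ?t)) \<partial>(lebesgue :: ('a \<times> 'a) measure))
        = (\<integral>\<^sup>+ z. ennreal (norm (fst z - snd z) powr (-(?n + ?t)) * \<bar>cutoff R (fst z) * w (fst z) - cutoff R (snd z) * w (snd z)\<bar> powr p) \<partial>(lebesgue :: ('a \<times> 'a) measure))"
      by (simp only: seminorm_form)
    also have "\<dots> \<le> ennreal ((1/2) powr (1 - p)) * (\<integral>\<^sup>+z. ennreal (norm (fst z - snd z) powr (-(?n + ?t)) * \<bar>w (fst z) - w (snd z)\<bar> powr p) \<partial>lebesgue)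
       + ennreal ((1 - 1/2) powr (1 - p) * 1 * (tailC ?n (p - ?t) + tailC ?n ?t) * R powr (-?t))
         * (\<integral>\<^sup>+y. ennreal (\<bar>w y\<bar> powr p) \<partial>lborel)"
      by (rule cut_energy[OF N ww w']) (use p t tp R in auto)
    also have "\<dots> < \<infinity>"
    proof -
      have "(\<integral>\<^sup>+z. ennreal (norm (fst z - snd z) powr (-(?n + ?t)) * \<bar>w (fst z) - w (snd z)\<bar> powr p) \<partial>(lebesgue :: ('a \<times> 'a) measure)) < \<infinity>"
        using wS by (simp only: seminorm_form)
      moreover have "(\<integral>\<^sup>+y. ennreal (\<bar>w y\<bar> powr p) \<partial>lborel) < \<infinity>"
        using wL by (simp add: nn_integral_completion)
      ultimately show ?thesis by (simp add: ennreal_mult_less_top)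
    qed
    finally show ?thesis .
  qed
  show ?thesis unfolding frac_sobolev_def using L S by auto
qed

lemma cut_energyK:
  fixes w :: "'a::euclidean_space \<Rightarrow> real" and K :: "'a \<Rightarrow> real"
  assumes adm: "admissible_kernel s p \<alpha> K" and al: "0 \<le> \<alpha>"
    and wm: "w \<in> borel_measurable lebesgue"
    and l: "0 < l" "l < 1" and p: "1 < p" and s: "s < 1" and t: "0 < s * p" and R: "0 < R"
  shows "energyK K p (\<lambda>x. cutoff R x * w x) UNIV
     \<le> ennreal (l powr (1 - p)) * energyK K p w UNIV
       + ennreal ((1 - l) powr (1 - p) * \<alpha> * (tailC (real DIM('a)) (p - s * p) + tailC (real DIM('a)) (s * p)) * R powr (-(s * p)))
         * (\<integral>\<^sup>+y. ennreal (\<bar>w y\<bar> powr p) \<partial>lborel)"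
proof -
  obtain w' N where w'[measurable]: "w' \<in> borel_measurable borel" and N: "N \<in> null_sets lborel"
    and ww: "\<And>x. x \<notin> N \<Longrightarrow> w x = w' x"
    using borel_version[OF wm] by blast
  have tp: "s * p < p" using s p t by simp
  show ?thesis
    unfolding energyK_def
    using cut_energy[OF N ww w', of K \<alpha> "s * p" l p R] adm_pos[OF adm] adm_upper[OF adm] al l p t tp R
    by (simp add: less_imp_le)
qed

lemma cut_support:
  assumes "0 < R" "2 * R \<le> r"
  shows "AE x in lebesgue. x \<notin> ball 0 r \<longrightarrow> cutoff R x * w x = 0"
  using assms by (intro AE_I2) (auto simp: cutoff_zero)

lemma cut_precise:
  fixes w :: "'a::euclidean_space \<Rightarrow> real"
  assumes R: "0 < R" and x: "norm x < R"
  shows "precise_rep (\<lambda>y. cutoff R y * w y) x = precise_rep w x"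
proof -
  have ev: "eventually (\<lambda>\<rho>. ball_avg (\<lambda>y. cutoff R y * w y) x \<rho> = ball_avg w x \<rho>) (at_right 0)"
  proof -
    have "eventually (\<lambda>\<rho>. \<rho> \<in> {0<..<R - norm x}) (at_right (0::real))"
      using x by (intro eventually_at_right_real) simp
    then show ?thesis
    proof eventually_elim
      case (elim \<rho>)
      have "\<forall>y. y \<in> ball x \<rho> \<longrightarrow> cutoff R y * w y = w y"
      proof (intro allI impI)
        fix y assume "y \<in> ball x \<rho>"
        then have "norm y \<le> R" using elim norm_triangle_ineq2[of y x]
          by (auto simp: dist_norm norm_minus_commute)
        then have "cutoff R y = 1" by (rule cutoff_one[OF R])
        then show "cutoff R y * w y = w y" by simp
      qed
      then have "(LINT y:ball x \<rho>|lebesgue. cutoff R y * w y) = (LINT y:ball x \<rho>|lebesgue. w y)"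
        by (intro set_lebesgue_integral_cong) auto
      then show ?case unfolding ball_avg_def by simp
    qed
  qed
  have "(\<exists>l. (ball_avg (\<lambda>y. cutoff R y * w y) x \<longlongrightarrow> l) (at_right 0)) = (\<exists>l. (ball_avg w x \<longlongrightarrow> l) (at_right 0))"
    using tendsto_cong[OF ev] by auto
  moreover have "Lim (at_right 0) (ball_avg (\<lambda>y. cutoff R y * w y) x) = Lim (at_right 0) (ball_avg w x)"
    by (rule Lim_cong[OF ev]) simp
  ultimately show ?thesis unfolding precise_rep_def by simp
qed

lemma good_version:
  fixes w :: "'a::euclidean_space \<Rightarrow> real"
  assumes wm: "w \<in> borel_measurable lebesgue" and supp: "AE x in lebesgue. x \<notin> ball 0 r \<longrightarrow> w x = 0"
  obtains v N where "v \<in> borel_measurable borel" "N \<in> null_sets lborel" "\<And>x. x \<notin> N \<Longrightarrow> w x = v x"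
    "\<And>x. r \<le> norm x \<Longrightarrow> v x = 0"
proof -
  obtain w' N1 where w'[measurable]: "w' \<in> borel_measurable borel" and N1: "N1 \<in> null_sets lborel"
    and ww: "\<And>x. x \<notin> N1 \<Longrightarrow> w x = w' x"
    using borel_version[OF wm] by blast
  have "AE x in lborel. x \<notin> ball 0 r \<longrightarrow> w x = 0" using supp by (simp add: AE_completion_iff)
  then obtain N2 where N2: "N2 \<in> null_sets lborel" "{x \<in> space lborel. \<not> (x \<notin> ball 0 r \<longrightarrow> w x = 0)} \<subseteq> N2"
    unfolding eventually_ae_filter by blast
  define v where "v x = indicator {x::'a. norm x < r} x * w' x" for x
  have "v \<in> borel_measurable borel" unfolding v_def by measurable
  moreover have "N1 \<union> N2 \<in> null_sets lborel" using N1 N2 by auto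
  moreover have "w x = v x" if "x \<notin> N1 \<union> N2" for x
  proof (cases "norm x < r")
    case True then show ?thesis using that ww by (simp add: v_def)
  next
    case False
    then have "w x = 0" using that N2(2) by auto
    then show ?thesis using False by (simp add: v_def)
  qed
  moreover have "v x = 0" if "r \<le> norm x" for x using that by (simp add: v_def)
  ultimately show ?thesis using that by blast
qed

lemma energy_mono_set: "energyK K p w A \<le> energyK K p w UNIV"
  unfolding energyK_def by (intro nn_integral_mono) (auto simp: indicator_def)

lemma le_mult_Inf:
  fixes a k :: ennreal
  assumes k: "0 < k" "k < top" and le: "\<And>x. x \<in> S \<Longrightarrow> a \<le> k * x"
  shows "a \<le> k * Inf S"
proof -
  have "a / k \<le> Inf S"
  proof (rule Inf_greatest)
    fix x assume "x \<in> S"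
    then have "a / k \<le> (k * x) / k" using le by (intro divide_right_mono_ennreal) auto
    also have "\<dots> = x" using k by (metis ennreal_mult_divide_eq mult.commute not_less_zero top.not_eq_extremum)
    finally show "a / k \<le> x" .
  qed
  then have "(a / k) * k \<le> Inf S * k" by (rule mult_right_mono) simp
  moreover have "(a / k) * k = a" using k
    by (metis ennreal_mult_divide_eq ennreal_times_divide mult.commute not_less_zero top.not_eq_extremum)
  ultimately show ?thesis by (simp add: mult.commute)
qed

lemma capK_le_CK: "capK K s p T \<le> CK K s p T r"
  unfolding capK_def CK_def by (rule Inf_superset_mono) blast

lemma rel_le_CK: "capK_rel K s p T R r \<le> CK K s p T r"
  unfolding capK_rel_def CK_def
proof (rule Inf_greatest)
  fix x assume "x \<in> {energyK K p w UNIV | w. w \<in> frac_sobolev s p \<and>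
       (AE x in lebesgue. x \<notin> ball 0 r \<longrightarrow> w x = 0) \<and> qe_on s p T (\<lambda>x. precise_rep w x \<ge> 1)}"
  then obtain w where w: "x = energyK K p w UNIV" "w \<in> frac_sobolev s p"
       "(AE x in lebesgue. x \<notin> ball 0 r \<longrightarrow> w x = 0)" "qe_on s p T (\<lambda>x. precise_rep w x \<ge> 1)" by blast
  have "Inf {energyK K p w (ball 0 R) | w. w \<in> frac_sobolev s p \<and>
       (AE x in lebesgue. x \<notin> ball 0 r \<longrightarrow> w x = 0) \<and> qe_on s p T (\<lambda>x. precise_rep w x \<ge> 1)} \<le> energyK K p w (ball 0 R)"
    using w by (intro Inf_lower) blast
  also have "\<dots> \<le> x" unfolding w(1) by (rule energy_mono_set)
  finally show "Inf {energyK K p w (ball 0 R) | w. w \<in> frac_sobolev s p \<and>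
       (AE x in lebesgue. x \<notin> ball 0 r \<longrightarrow> w x = 0) \<and> qe_on s p T (\<lambda>x. precise_rep w x \<ge> 1)} \<le> x" .
qed

lemma part2:
  fixes s p \<alpha> :: real
  assumes p: "1 < p" and t: "0 < s * p" and al: "\<alpha> \<ge> 1"
  shows "\<exists>c>0. \<forall>(K :: 'a::euclidean_space \<Rightarrow> real) T r R. admissible_kernel s p \<alpha> K \<longrightarrow> bounded T \<longrightarrow>
            0 < r \<longrightarrow> r < R \<longrightarrow>
            capK K s p T - capK_rel K s p T R r
              \<le> ennreal (c * r powr (s * p) / (R - r) powr (s * p)) * CK K s p T r"
proof -
  obtain C where C: "C > 0" and H: "\<forall>(K::'a \<Rightarrow> real) v r R. admissible_kernel s p \<alpha> K \<longrightarrow>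
     v \<in> borel_measurable borel \<longrightarrow> (\<forall>x. r \<le> norm x \<longrightarrow> v x = 0) \<longrightarrow> 0 < r \<longrightarrow> 2 * r \<le> R \<longrightarrow>
     energyK K p v UNIV \<le> ennreal (1 + C * (r powr (s * p) / (R - r) powr (s * p))) * energyK K p v (ball 0 R)"
    using rel_bound_borel[of \<alpha> s p, where 'a='a] al t p by auto
  show ?thesis
  proof (intro exI[of _ "C + 1"] conjI allI impI)
    show "0 < C + 1" using C by simp
    fix K :: "'a \<Rightarrow> real" and T :: "'a set" and r R :: real
    assume adm: "admissible_kernel s p \<alpha> K" and "bounded T" and r: "0 < r" and rR: "r < R"
    define \<theta> where "\<theta> = r powr (s * p) / (R - r) powr (s * p)"
    have thpos: "0 < \<theta>" unfolding \<theta>_def using r rR by simp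
    have ceq: "(C + 1) * r powr (s * p) / (R - r) powr (s * p) = (C + 1) * \<theta>"
      unfolding \<theta>_def by simp
    let ?cap = "capK K s p T" and ?rel = "capK_rel K s p T R r" and ?CK = "CK K s p T r"
    show "?cap - ?rel \<le> ennreal ((C + 1) * r powr (s * p) / (R - r) powr (s * p)) * ?CK"
    proof (cases "2 * r \<le> R")
      case True
      have caple: "?cap \<le> ennreal (1 + C * \<theta>) * ?rel"
        unfolding capK_rel_def
      proof (rule le_mult_Inf)
        show "0 < ennreal (1 + C * \<theta>)" using C thpos by (simp add: ennreal_less_iff add_pos_pos del: ennreal_plus)
        show "ennreal (1 + C * \<theta>) < top" by simp
        fix x assume "x \<in> {energyK K p w (ball 0 R) | w. w \<in> frac_sobolev s p \<and>
            (AE x in lebesgue. x \<notin> ball 0 r \<longrightarrow> w x = 0) \<and> qe_on s p T (\<lambda>x. precise_rep w x \<ge> 1)}"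
        then obtain w where w: "x = energyK K p w (ball 0 R)" "w \<in> frac_sobolev s p"
            "AE x in lebesgue. x \<notin> ball 0 r \<longrightarrow> w x = 0" "qe_on s p T (\<lambda>x. precise_rep w x \<ge> 1)" by blast
        have wm: "w \<in> borel_measurable lebesgue" using w(2) unfolding frac_sobolev_def by auto
        obtain v N where v: "v \<in> borel_measurable borel" "N \<in> null_sets lborel" "\<And>x. x \<notin> N \<Longrightarrow> w x = v x"
          "\<And>x. r \<le> norm x \<Longrightarrow> v x = 0"
          using good_version[OF wm w(3)] by blast
        have "?cap \<le> energyK K p w UNIV"
          unfolding capK_def using w by (intro Inf_lower) blast
        also have "\<dots> = energyK K p v UNIV" by (rule energy_ae_eq[OF v(2) v(3)])
        also have "\<dots> \<le> ennreal (1 + C * \<theta>) * energyK K p v (ball 0 R)"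
          unfolding \<theta>_def using H adm v r True by blast
        also have "energyK K p v (ball 0 R) = x" unfolding w(1) by (rule energy_ae_eq[OF v(2) v(3), symmetric])
        finally show "?cap \<le> ennreal (1 + C * \<theta>) * x" .
      qed
      have "ennreal (1 + C * \<theta>) * ?rel = ?rel + ennreal (C * \<theta>) * ?rel"
        using C thpos by (simp add: ennreal_plus distrib_right)
      then have caple2: "?cap \<le> ?rel + ennreal (C * \<theta>) * ?rel" using caple by simp
      have "?cap - ?rel \<le> ennreal (C * \<theta>) * ?rel"
      proof (subst ennreal_minus_le_iff, intro conjI impI)
        show "?cap \<le> ?rel + ennreal (C * \<theta>) * ?rel" by (rule caple2)
        assume "?cap = top \<and> ?rel = top"
        then show "ennreal (C * \<theta>) * ?rel = top" using C thpos by (simp add: ennreal_mult_eq_top_iff)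
      qed
      also have "\<dots> \<le> ennreal ((C + 1) * \<theta>) * ?CK"
        using C thpos by (intro mult_mono ennreal_leI rel_le_CK) (auto simp: distrib_right)
      finally show ?thesis by (simp only: ceq)
    next
      case False
      have "(R - r) powr (s * p) \<le> r powr (s * p)" using False rR t by (intro powr_mono2) auto
      then have th1: "1 \<le> \<theta>" unfolding \<theta>_def using r rR by simp
      have "?cap - ?rel \<le> ?cap" by (rule diff_le_self_ennreal)
      also have "\<dots> \<le> ?CK" by (rule capK_le_CK)
      also have "\<dots> = ennreal 1 * ?CK" by simp
      also have "\<dots> \<le> ennreal ((C + 1) * \<theta>) * ?CK"
      proof (intro mult_right_mono ennreal_leI)
        have "1 * 1 \<le> (C + 1) * \<theta>" by (rule mult_mono) (use C th1 in auto)
        then show "1 \<le> (C + 1) * \<theta>" by simp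
      qed simp
      finally show ?thesis by (simp only: ceq)
    qed
  qed
qed

lemma cut_approx:
  fixes K w :: "'a::euclidean_space \<Rightarrow> real" and a :: ennreal
  assumes adm: "admissible_kernel s p \<alpha> K" and al: "0 \<le> \<alpha>"
    and w: "w \<in> frac_sobolev s p" and Ea: "energyK K p w UNIV < a"
    and p: "1 < p" and s: "s < 1" and t: "0 < s * p"
  shows "\<exists>R. R0 \<le> R \<and> 0 < R \<and> energyK K p (\<lambda>x. cutoff R x * w x) UNIV < a"
proof -
  let ?n = "real DIM('a)" and ?t = "s * p"
  define Cp where "Cp = tailC ?n (p - ?t) + tailC ?n ?t"
  have tp: "?t < p" using s p t by simp
  have Cpnn: "0 \<le> Cp" unfolding Cp_def using t tp tailC_pos[of "p - ?t" ?n] tailC_pos[of ?t ?n] by auto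
  have wm: "w \<in> borel_measurable lebesgue" and wL: "(\<integral>\<^sup>+ x. ennreal (\<bar>w x\<bar> powr p) \<partial>lebesgue) < \<infinity>"
    using w unfolding frac_sobolev_def by auto
  define M where "M = (\<integral>\<^sup>+y. ennreal (\<bar>w y\<bar> powr p) \<partial>lborel)"
  have Mfin: "M < top" using wL by (simp add: M_def nn_integral_completion)
  define e where "e = energyK K p w UNIV"
  have efin: "e < top" using Ea unfolding e_def using top.not_eq_extremum by fastforce
  define e' where "e' = enn2real e"
  define M' where "M' = enn2real M"
  have ee: "e = ennreal e'" and e'nn: "0 \<le> e'" using efin by (auto simp: e'_def)
  have MM: "M = ennreal M'" and M'nn: "0 \<le> M'" using Mfin by (auto simp: M'_def)
  obtain a' where a': "e' < a'" "ennreal a' \<le> a"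
  proof (cases "a = top")
    case True then show ?thesis using that[of "e' + 1"] by simp
  next
    case False
    then have "e' < enn2real a" using Ea ee e'nn unfolding e_def
      by (metis enn2real_ennreal ennreal_enn2real ennreal_less_iff top.not_eq_extremum)
    then show ?thesis using that[of "enn2real a"] False by (simp add: less_top)
  qed
  define m where "m = (e' + a') / 2"
  have m: "e' < m" "m < a'" using a' by (auto simp: m_def)
  have "((\<lambda>l::real. l powr (1 - p) * e') \<longlongrightarrow> 1 powr (1 - p) * e') (at_left 1)"
    by (intro tendsto_intros) auto
  then have ev1: "eventually (\<lambda>l::real. l powr (1 - p) * e' < m) (at_left 1)"
    using m by (intro order_tendstoD(2)) auto
  have ev2: "eventually (\<lambda>l::real. l \<in> {0<..<1}) (at_left 1)"
    by (intro eventually_at_left_real) simp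
  obtain l where l: "0 < l" "l < 1" "l powr (1 - p) * e' < m"
    using eventually_happens[OF eventually_conj[OF ev1 ev2]] by auto
  define A where "A = (1 - l) powr (1 - p) * \<alpha> * Cp * M'"
  have Ann: "0 \<le> A" unfolding A_def using al Cpnn M'nn by simp
  have "((\<lambda>R::real. A * R powr (-?t)) \<longlongrightarrow> A * 0) at_top"
    by (intro tendsto_mult tendsto_const tendsto_neg_powr filterlim_ident) (use t in simp)
  then have ev3: "eventually (\<lambda>R::real. A * R powr (-?t) < a' - m) at_top"
    using m by (intro order_tendstoD(2)) auto
  have ev4: "eventually (\<lambda>R::real. max R0 1 \<le> R) at_top" by (rule eventually_ge_at_top)
  obtain R where R: "A * R powr (-?t) < a' - m" "max R0 1 \<le> R"
    using eventually_happens[OF eventually_conj[OF ev3 ev4]] by auto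
  have Rpos: "0 < R" using R by simp
  have "energyK K p (\<lambda>x. cutoff R x * w x) UNIV
     \<le> ennreal (l powr (1 - p)) * e + ennreal ((1 - l) powr (1 - p) * \<alpha> * Cp * R powr (-?t)) * M"
    unfolding e_def M_def Cp_def by (rule cut_energyK[OF adm al wm l(1) l(2) p s t Rpos])
  also have "\<dots> = ennreal (l powr (1 - p) * e' + A * R powr (-?t))"
    unfolding ee MM A_def using al Cpnn M'nn e'nn
    by (simp add: ennreal_mult'[symmetric] ennreal_plus[symmetric] mult_ac del: ennreal_plus)
  also have "\<dots> < ennreal a'"
    using l R m e'nn Ann by (subst ennreal_less_iff) (auto intro!: add_nonneg_nonneg mult_nonneg_nonneg)
  also have "\<dots> \<le> a" by (rule a'(2))
  finally show ?thesis using R Rpos by auto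
qed

lemma part1:
  fixes s p \<alpha> :: real
  assumes p: "1 < p" and s: "s < 1" and t: "0 < s * p" and al: "\<alpha> \<ge> 1"
  shows "\<forall>(K :: 'a::euclidean_space \<Rightarrow> real) T. admissible_kernel s p \<alpha> K \<longrightarrow> bounded T \<longrightarrow>
            ((\<lambda>r. CK K s p T r) \<longlongrightarrow> capK K s p T) at_top"
proof (intro allI impI)
  fix K :: "'a \<Rightarrow> real" and T :: "'a set"
  assume adm: "admissible_kernel s p \<alpha> K" and bT: "bounded T"
  obtain R0 where R0: "R0 > 0" "T \<subseteq> ball 0 R0" using bounded_subset_ballD[OF bT] by blast
  show "((\<lambda>r. CK K s p T r) \<longlongrightarrow> capK K s p T) at_top"
  proof (rule order_tendstoI)
    fix a assume "a < capK K s p T"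
    then show "eventually (\<lambda>r. a < CK K s p T r) at_top"
      using capK_le_CK[of K s p T] by (intro always_eventually) (auto intro: less_le_trans)
  next
    fix a assume "capK K s p T < a"
    then obtain x where "x \<in> {energyK K p w UNIV | w. w \<in> frac_sobolev s p \<and>
       qe_on s p T (\<lambda>x. precise_rep w x \<ge> 1)}" "x < a"
      unfolding capK_def Inf_less_iff by blast
    then obtain w where w: "w \<in> frac_sobolev s p" "qe_on s p T (\<lambda>x. precise_rep w x \<ge> 1)"
      "energyK K p w UNIV < a" by blast
    obtain R where R: "R0 \<le> R" "0 < R" "energyK K p (\<lambda>x. cutoff R x * w x) UNIV < a"
      using cut_approx[OF adm _ w(1) w(3) p s t, of R0] al by auto
    let ?v = "\<lambda>x. cutoff R x * w x"
    have vS: "?v \<in> frac_sobolev s p" by (rule cut_sobolev[OF w(1) p s t R(2)])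
    have vq: "qe_on s p T (\<lambda>x. precise_rep ?v x \<ge> 1)"
    proof -
      obtain N where N: "sp_capacity s p N = 0" "\<forall>x\<in>T - N. 1 \<le> precise_rep w x"
        using w(2) unfolding qe_on_def by blast
      have "\<forall>x\<in>T - N. 1 \<le> precise_rep ?v x"
      proof
        fix x assume x: "x \<in> T - N"
        then have "norm x < R" using R0 R by auto
        then have "precise_rep ?v x = precise_rep w x" by (rule cut_precise[OF R(2)])
        then show "1 \<le> precise_rep ?v x" using N x by simp
      qed
      then show ?thesis unfolding qe_on_def using N by blast
    qed
    show "eventually (\<lambda>r. CK K s p T r < a) at_top"
      unfolding eventually_at_top_linorder
    proof (intro exI[of _ "2 * R"] allI impI)
      fix r assume r: "2 * R \<le> r"
      have "CK K s p T r \<le> energyK K p ?v UNIV"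
        unfolding CK_def using vS vq cut_support[OF R(2) r, of w] by (intro Inf_lower) blast
      then show "CK K s p T r < a" using R(3) by simp
    qed
  qed
qed

theorem mainTheorem7:
  fixes s p \<alpha> :: real
  assumes "DIM('a::euclidean_space) \<ge> 2"
    and "1 < p" and "0 < s" and "s < 1"
    and "1 < s * p" and "s * p < real DIM('a)"
    and "\<alpha> \<ge> 1"
  shows "(\<forall>(K :: 'a \<Rightarrow> real) T. admissible_kernel s p \<alpha> K \<longrightarrow> bounded T \<longrightarrow>
            ((\<lambda>r. CK K s p T r) \<longlongrightarrow> capK K s p T) at_top)
       \<and> (\<exists>c>0. \<forall>(K :: 'a \<Rightarrow> real) T r R. admissible_kernel s p \<alpha> K \<longrightarrow> bounded T \<longrightarrow>
            0 < r \<longrightarrow> r < R \<longrightarrow>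
            capK K s p T - capK_rel K s p T R r
              \<le> ennreal (c * r powr (s * p) / (R - r) powr (s * p)) * CK K s p T r)"
proof
  have t: "0 < s * p" using assms by simp
  show "\<forall>(K :: 'a \<Rightarrow> real) T. admissible_kernel s p \<alpha> K \<longrightarrow> bounded T \<longrightarrow>
            ((\<lambda>r. CK K s p T r) \<longlongrightarrow> capK K s p T) at_top"
    using part1[OF assms(2) assms(4) t assms(7)] by blast
  show "\<exists>c>0. \<forall>(K :: 'a \<Rightarrow> real) T r R. admissible_kernel s p \<alpha> K \<longrightarrow> bounded T \<longrightarrow>
            0 < r \<longrightarrow> r < R \<longrightarrow>
            capK K s p T - capK_rel K s p T R r
              \<le> ennreal (c * r powr (s * p) / (R - r) powr (s * p)) * CK K s p T r"
    using part2[OF assms(2) t assms(7)] by blast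
qed


end
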